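(* Let $n\ge1$ and let $\mathfrak{g}$ be of type $B_n$. Then \[ \operatorname{Cat}_{n+1}(q)\prod_{k=1}^n(1+q^k)=\widetilde{\operatorname{ps}}(3\omega_n). \]
   Context: For type $B_n$, $\omega_n=\tfrac12(\epsilon_1+\cdots+\epsilon_n)$. The principal specialization $\operatorname{ps}(\lambda)$ is $\operatorname{ch}V(\lambda)$ with $x_i=q^i$ substituted (a Laurent polynomial in $q^{1/2}$), and $\widetilde{\operatorname{ps}}(\lambda)=q^{-\eta}\operatorname{ps}(\lambda)$ with $\eta$ the lowest exponent of $q$ in $\operatorname{ps}(\lambda)$. $\operatorname{Cat}_k(q)=\frac1{[k+1]_q}\begin{bmatrix}2k\\ k\end{bmatrix}_q$ is the Mahonian $q$-Catalan number. *)

theory Defs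
  imports "HOL-Computational_Algebra.Formal_Laurent_Series" "HOL-Combinatorics.Permutations"
begin

text \<open>Weights of type B_n are encoded by DOUBLED coordinates: a weight
  mu = sum_i mu_i eps_(i+1) is the function v :: nat => int with v i = 2 mu_i for i < n,
  and v i = 0 for i >= n.\<close>

definition weylB :: "nat \<Rightarrow> ((nat \<Rightarrow> nat) \<times> (nat \<Rightarrow> int)) set" where
  "weylB n = {(\<sigma>, e). \<sigma> permutes {..<n} \<and> (\<forall>i<n. e i = 1 \<or> e i = -1) \<and> (\<forall>i\<ge>n. e i = 1)}"

definition weyl_act :: "((nat \<Rightarrow> nat) \<times> (nat \<Rightarrow> int)) \<Rightarrow> (nat \<Rightarrow> int) \<Rightarrow> (nat \<Rightarrow> int)" where
  "weyl_act w v = (\<lambda>i. snd w i * v (fst w i))"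

definition weyl_sgn :: "nat \<Rightarrow> ((nat \<Rightarrow> nat) \<times> (nat \<Rightarrow> int)) \<Rightarrow> int" where
  "weyl_sgn n w = sign (fst w) * (\<Prod>i<n. snd w i)"

text \<open>rho = (n - 1/2, n - 3/2, ..., 1/2), doubled.\<close>
definition rhoB :: "nat \<Rightarrow> nat \<Rightarrow> int" where
  "rhoB n = (\<lambda>i. if i < n then 2 * int n - 2 * int i - 1 else 0)"

text \<open>m is the (formal) character of V(lam): a finitely supported weight-multiplicity
  function satisfying the Weyl character formula A_rho * ch = A_(lam+rho) in the group ring.\<close>
definition is_charB :: "nat \<Rightarrow> (nat \<Rightarrow> int) \<Rightarrow> ((nat \<Rightarrow> int) \<Rightarrow> int) \<Rightarrow> bool" where
  "is_charB n lam m \<longleftrightarrow>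
     finite {\<mu>. m \<mu> \<noteq> 0} \<and>
     (\<forall>\<mu>. m \<mu> \<noteq> 0 \<longrightarrow> (\<forall>i\<ge>n. \<mu> i = 0)) \<and>
     (\<forall>\<mu>. (\<Sum>w\<in>weylB n. weyl_sgn n w * m (\<lambda>i. \<mu> i - weyl_act w (rhoB n) i))
          = (\<Sum>w\<in>weylB n. weyl_sgn n w *
               (if weyl_act w (\<lambda>i. lam i + rhoB n i) = \<mu> then 1 else 0)))"

definition charB :: "nat \<Rightarrow> (nat \<Rightarrow> int) \<Rightarrow> (nat \<Rightarrow> int) \<Rightarrow> int" where
  "charB n lam = (THE m. is_charB n lam m)"

text \<open>Principal specialization x_i = q^i, written in the variable t = q^(1/2)
  (t = fls_X): e^mu maps to q^(sum_i mu_i * i) = t^(sum_i (2 mu_i) * i).\<close>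
definition psB :: "nat \<Rightarrow> (nat \<Rightarrow> int) \<Rightarrow> rat fls" where
  "psB n lam = (\<Sum>\<mu>\<in>{\<mu>. charB n lam \<mu> \<noteq> 0}.
      of_int (charB n lam \<mu>) * fls_X_intpow (\<Sum>i<n. int (i + 1) * \<mu> i))"

definition psB_tilde :: "nat \<Rightarrow> (nat \<Rightarrow> int) \<Rightarrow> rat fls" where
  "psB_tilde n lam = fls_shift (fls_subdegree (psB n lam)) (psB n lam)"

text \<open>3 omega_n = (3/2, ..., 3/2), doubled.\<close>
definition three_omega_n :: "nat \<Rightarrow> nat \<Rightarrow> int" where
  "three_omega_n n = (\<lambda>i. if i < n then 3 else 0)"

definition qvar :: "rat fls" where "qvar = fls_X ^ 2"

definition qint :: "nat \<Rightarrow> rat fls" where "qint m = (\<Sum>i<m. qvar ^ i)"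
definition qfact :: "nat \<Rightarrow> rat fls" where "qfact m = (\<Prod>i=1..m. qint i)"
definition qbinom :: "nat \<Rightarrow> nat \<Rightarrow> rat fls" where
  "qbinom m k = qfact m / (qfact k * qfact (m - k))"
definition qCat :: "nat \<Rightarrow> rat fls" where
  "qCat k = qbinom (2 * k) k / qint (k + 1)"

end

theory Submission
  imports Defs "Jordan_Normal_Form.Determinant" "HOL-Library.Poly_Mapping"
begin


definition vand :: "nat \<Rightarrow> (nat \<Rightarrow> 'a::comm_ring_1) \<Rightarrow> 'a" where
  "vand n z = (\<Prod>i<n. \<Prod>i'<i. z i - z i')"

lemma vand_Suc_shift:
  "vand (Suc n) z = (\<Prod>i<n. z (Suc i) - z 0) * vand n (\<lambda>i. z (Suc i))"
proof -
  have "vand (Suc n) z = (\<Prod>i<n. \<Prod>i'<Suc i. z (Suc i) - z i')"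
    unfolding vand_def by (subst prod.lessThan_Suc_shift) simp
  also have "\<dots> = (\<Prod>i<n. (z (Suc i) - z 0) * (\<Prod>i'<i. z (Suc i) - z (Suc i')))"
    by (subst prod.lessThan_Suc_shift) simp
  also have "\<dots> = (\<Prod>i<n. z (Suc i) - z 0) * vand n (\<lambda>i. z (Suc i))"
    unfolding vand_def prod.distrib by simp
  finally show ?thesis .
qed

lemma det_rowscale:
  fixes r :: "nat \<Rightarrow> 'a::comm_ring_1"
  shows "det (mat n n (\<lambda>(i,j). r i * a i j)) = (\<Prod>i<n. r i) * det (mat n n (\<lambda>(i,j). a i j))"
proof -
  have "det (mat n n (\<lambda>(i,j). r i * a i j)) =
     (\<Sum>p\<in>{p. p permutes {0..<n}}. signof p * (\<Prod>i=0..<n. r i * a i (p i)))"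
    by (subst det_def'[of _ n]) (auto intro!: sum.cong prod.cong simp: permutes_def)
  also have "\<dots> = (\<Sum>p\<in>{p. p permutes {0..<n}}. (\<Prod>i<n. r i) * (signof p * (\<Prod>i=0..<n. a i (p i))))"
    by (intro sum.cong refl) (simp add: prod.distrib atLeast0LessThan mult_ac)
  also have "\<dots> = (\<Prod>i<n. r i) * det (mat n n (\<lambda>(i,j). a i j))"
    by (subst det_def'[of _ n]) (auto simp: sum_distrib_left intro!: sum.cong prod.cong arg_cong2[where f="(*)"] simp: permutes_def)
  finally show ?thesis .
qed

lemma det_vandermonde_mono:
  fixes z :: "nat \<Rightarrow> 'a::comm_ring_1"
  shows "det (mat n n (\<lambda>(i,k). z i ^ k)) = vand n z"
proof (induction n arbitrary: z)
  case 0
  then show ?case by (simp add: vand_def)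
next
  case (Suc n)
  let ?V = "mat (Suc n) (Suc n) (\<lambda>(i,k). z i ^ k)"
  let ?T = "mat (Suc n) (Suc n) (\<lambda>(k,k'). if k = k' then 1 else if Suc k = k' then - z 0 else 0)"
  have V: "?V \<in> carrier_mat (Suc n) (Suc n)" and T: "?T \<in> carrier_mat (Suc n) (Suc n)" by auto
  have detT: "det ?T = 1"
    by (subst det_upper_triangular[of _ "Suc n"]) (auto simp: upper_triangular_def prod_list_diag_prod)
  have VT: "?V * ?T = mat (Suc n) (Suc n) (\<lambda>(i,k). if k = 0 then 1 else z i ^ (k - 1) * (z i - z 0))"
  proof (rule eq_matI)
    fix i k assume i: "i < dim_row (mat (Suc n) (Suc n) (\<lambda>(i,k). if k = 0 then 1 else z i ^ (k - 1) * (z i - z 0)))"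
      and k: "k < dim_col (mat (Suc n) (Suc n) (\<lambda>(i,k). if k = 0 then 1 else z i ^ (k - 1) * (z i - z 0)))"
    have "(?V * ?T) $$ (i,k) = (\<Sum>l<Suc n. z i ^ l * (if l = k then 1 else if Suc l = k then - z 0 else 0))"
      using i k by (simp add: scalar_prod_def atLeast0LessThan)
    also have "\<dots> = (if k = 0 then 1 else z i ^ (k - 1) * (z i - z 0))"
    proof (cases k)
      case 0
      then show ?thesis by (simp add: if_distrib sum.delta' cong: if_cong)
    next
      case (Suc k')
      have "(\<Sum>l<Suc n. z i ^ l * (if l = k then 1 else if Suc l = k then - z 0 else 0))
          = (\<Sum>l<Suc n. (if l = k then z i ^ l else 0)) + (\<Sum>l<Suc n. (if l = k' then - (z i ^ l * z 0) else 0))"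
        by (subst sum.distrib[symmetric]) (intro sum.cong refl, auto simp: Suc)
      also have "\<dots> = z i ^ k - z i ^ k' * z 0"
        using k Suc by (simp add: sum.delta)
      finally show ?thesis using Suc by (simp add: algebra_simps)
    qed
    finally show "(?V * ?T) $$ (i,k) = mat (Suc n) (Suc n) (\<lambda>(i,k). if k = 0 then 1 else z i ^ (k - 1) * (z i - z 0)) $$ (i,k)"
      using i k by simp
  qed auto
  let ?W = "mat (Suc n) (Suc n) (\<lambda>(i,k). if k = 0 then 1 else z i ^ (k - 1) * (z i - z 0))"
  have "det ?V = det (?V * ?T)" using det_mult[OF V T] detT by simp
  also have "\<dots> = det ?W" using VT by simp
  also have "\<dots> = (\<Sum>k<Suc n. ?W $$ (0,k) * cofactor ?W 0 k)"
    by (rule laplace_expansion_row) auto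
  also have "\<dots> = cofactor ?W 0 0"
    by (subst sum.lessThan_Suc_shift) simp
  also have "\<dots> = det (mat n n (\<lambda>(i,k). (z (Suc i) - z 0) * z (Suc i) ^ k))"
    unfolding cofactor_def mat_delete_def
    by (simp, intro arg_cong[where f=det] eq_matI) (auto simp: mult_ac)
  also have "\<dots> = (\<Prod>i<n. z (Suc i) - z 0) * vand n (\<lambda>i. z (Suc i))"
    using det_rowscale[where r="\<lambda>i. z (Suc i) - z 0" and n=n and a="\<lambda>i k. z (Suc i) ^ k"] Suc.IH by simp
  finally show ?case by (simp add: vand_Suc_shift)
qed


lemma poly_sum_lessThan:
  fixes p :: "'a::comm_semiring_1 poly"
  assumes "degree p < n"
  shows "poly p x = (\<Sum>k<n. coeff p k * x ^ k)"
proof -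
  have "poly p x = (\<Sum>k\<le>degree p. coeff p k * x ^ k)" by (simp add: poly_altdef)
  also have "\<dots> = (\<Sum>k<n. coeff p k * x ^ k)"
    using assms by (intro sum.mono_neutral_left) (auto simp: coeff_eq_0)
  finally show ?thesis .
qed

lemma det_vandermonde_poly:
  fixes z :: "nat \<Rightarrow> 'a::comm_ring_1" and p :: "nat \<Rightarrow> 'a poly"
  assumes deg: "\<And>j. j < n \<Longrightarrow> degree (p j) \<le> j" and lc: "\<And>j. j < n \<Longrightarrow> coeff (p j) j = 1"
  shows "det (mat n n (\<lambda>(i,j). poly (p j) (z i))) = vand n z"
proof -
  let ?V = "mat n n (\<lambda>(i,k). z i ^ k)"
  let ?C = "mat n n (\<lambda>(k,j). coeff (p j) k)"
  have V: "?V \<in> carrier_mat n n" and C: "?C \<in> carrier_mat n n" by auto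
  have "mat n n (\<lambda>(i,j). poly (p j) (z i)) = ?V * ?C"
  proof (rule eq_matI)
    fix i j assume i: "i < dim_row (?V * ?C)" and j: "j < dim_col (?V * ?C)"
    have "degree (p j) < n" using deg[of j] j by simp
    then show "mat n n (\<lambda>(i,j). poly (p j) (z i)) $$ (i,j) = (?V * ?C) $$ (i,j)"
      using i j by (simp add: scalar_prod_def atLeast0LessThan poly_sum_lessThan mult_ac)
  qed auto
  moreover have "det ?C = 1"
  proof -
    have "\<And>i j. i < n \<Longrightarrow> j < i \<Longrightarrow> degree (p j) < i"
      using deg by (meson le_less_trans less_trans)
    then show ?thesis
      by (subst det_upper_triangular[of _ n]) (auto simp: upper_triangular_def prod_list_diag_prod lc
        intro!: prod.neutral coeff_eq_0)
  qed
  ultimately show ?thesis using det_mult[OF V C] det_vandermonde_mono[of n z] by simp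
qed


definition signsE :: "nat \<Rightarrow> (nat \<Rightarrow> int) set" where
  "signsE n = {e. (\<forall>i<n. e i = 1 \<or> e i = -1) \<and> (\<forall>i\<ge>n. e i = 1)}"

lemma signsE_Suc:
  "signsE (Suc n) = (\<lambda>(e,s). e(n:=s)) ` (signsE n \<times> {1,-1})"
proof (rule equalityI; rule subsetI)
  fix e' assume e': "e' \<in> signsE (Suc n)"
  have "e' = (\<lambda>(e,s). e(n:=s)) (e'(n:=1), e' n)" by auto
  moreover have "(e'(n:=1), e' n) \<in> signsE n \<times> {1,-1}"
    using e' unfolding signsE_def by (auto simp: less_Suc_eq)
  ultimately show "e' \<in> (\<lambda>(e,s). e(n:=s)) ` (signsE n \<times> {1,-1})" by blast
next
  fix e' assume "e' \<in> (\<lambda>(e,s). e(n:=s)) ` (signsE n \<times> {1,-1})"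
  then show "e' \<in> signsE (Suc n)" unfolding signsE_def by (auto simp: less_Suc_eq)
qed

lemma signsE_finite: "finite (signsE n)"
proof (induction n)
  case 0
  have "signsE 0 = {\<lambda>_. 1}" unfolding signsE_def by auto
  then show ?case by simp
next
  case (Suc n)
  then show ?case by (simp add: signsE_Suc)
qed

lemma signsE_sum_prod:
  fixes F :: "nat \<Rightarrow> int \<Rightarrow> 'a::comm_semiring_1"
  shows "(\<Sum>e\<in>signsE n. \<Prod>i<n. F i (e i)) = (\<Prod>i<n. F i 1 + F i (-1))"
proof (induction n)
  case 0
  have "signsE 0 = {\<lambda>_. 1}" unfolding signsE_def by auto
  then show ?case by simp
next
  case (Suc n)
  have inj: "inj_on (\<lambda>(e,s). e(n:=s)) (signsE n \<times> {1,-1})"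
  proof (rule inj_onI, clarify)
    fix e s e' s' assume A: "e \<in> signsE n" "s \<in> {1,-1}" "e' \<in> signsE n" "s' \<in> {1,-1}"
      and eq: "e(n := s) = e'(n := s')"
    have "s = s'" using fun_cong[OF eq, of n] by simp
    moreover have "e = e'"
    proof
      fix i show "e i = e' i"
        using fun_cong[OF eq, of i] A unfolding signsE_def by (cases "i = n") auto
    qed
    ultimately show "e = e' \<and> s = s'" by simp
  qed
  have "(\<Sum>e\<in>signsE (Suc n). \<Prod>i<Suc n. F i (e i))
      = (\<Sum>(e,s)\<in>signsE n \<times> {1,-1}. \<Prod>i<Suc n. F i ((e(n:=s)) i))"
    unfolding signsE_Suc by (subst sum.reindex[OF inj]) (simp add: case_prod_beta')
  also have "\<dots> = (\<Sum>(e,s)\<in>signsE n \<times> {1,-1}. (\<Prod>i<n. F i (e i)) * F n s)"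
    by (intro sum.cong refl) (auto intro!: prod.cong)
  also have "\<dots> = (\<Sum>e\<in>signsE n. \<Sum>s\<in>{1,-1}. (\<Prod>i<n. F i (e i)) * F n s)"
    by (subst sum.cartesian_product) simp
  also have "\<dots> = (\<Sum>e\<in>signsE n. \<Prod>i<n. F i (e i)) * (F n 1 + F n (-1))"
    by (simp add: sum_distrib_right distrib_left sum.distrib)
  also have "\<dots> = (\<Prod>i<Suc n. F i 1 + F i (-1))" using Suc by simp
  finally show ?case .
qed

lemma weylB_eq: "weylB n = {\<sigma>. \<sigma> permutes {..<n}} \<times> signsE n"
  unfolding weylB_def signsE_def by auto

lemma weyl_sum_det:
  fixes g :: "nat \<Rightarrow> int \<Rightarrow> 'a::comm_ring_1" and \<mu> :: "nat \<Rightarrow> int"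
  shows "(\<Sum>w\<in>weylB n. of_int (weyl_sgn n w) * (\<Prod>i<n. g i (snd w i * \<mu> (fst w i))))
       = det (mat n n (\<lambda>(i,j). g i (\<mu> j) - g i (- \<mu> j)))"
proof -
  have "(\<Sum>w\<in>weylB n. of_int (weyl_sgn n w) * (\<Prod>i<n. g i (snd w i * \<mu> (fst w i))))
     = (\<Sum>\<sigma>\<in>{\<sigma>. \<sigma> permutes {..<n}}. \<Sum>e\<in>signsE n.
          of_int (sign \<sigma>) * (\<Prod>i<n. of_int (e i) * g i (e i * \<mu> (\<sigma> i))))"
  proof -
    have "(\<Sum>w\<in>weylB n. of_int (weyl_sgn n w) * (\<Prod>i<n. g i (snd w i * \<mu> (fst w i))))
      = (\<Sum>(\<sigma>,e)\<in>{\<sigma>. \<sigma> permutes {..<n}} \<times> signsE n.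
          of_int (sign \<sigma>) * (\<Prod>i<n. of_int (e i) * g i (e i * \<mu> (\<sigma> i))))"
      unfolding weylB_eq weyl_sgn_def
      by (intro sum.cong refl) (auto simp: prod.distrib mult_ac)
    then show ?thesis by (simp add: sum.cartesian_product)
  qed
  also have "\<dots> = (\<Sum>\<sigma>\<in>{\<sigma>. \<sigma> permutes {..<n}}.
          of_int (sign \<sigma>) * (\<Prod>i<n. g i (\<mu> (\<sigma> i)) - g i (- \<mu> (\<sigma> i))))"
  proof (intro sum.cong refl)
    fix x :: "nat \<Rightarrow> nat"
    show "(\<Sum>e\<in>signsE n. of_int (sign x) * (\<Prod>i<n. of_int (e i) * g i (e i * \<mu> (x i))))
       = of_int (sign x) * (\<Prod>i<n. g i (\<mu> (x i)) - g i (- \<mu> (x i)))"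
      using signsE_sum_prod[of "\<lambda>i s. of_int s * g i (s * \<mu> (x i))" n]
      by (simp add: sum_distrib_left[symmetric])
  qed
  also have "\<dots> = det (mat n n (\<lambda>(i,j). g i (\<mu> j) - g i (- \<mu> j)))"
    by (subst det_def'[of _ n]) (auto simp: atLeast0LessThan permutes_def intro!: sum.cong prod.cong)
  finally show ?thesis .
qed


fun chebU :: "nat \<Rightarrow> 'a::comm_ring_1 poly" where
  "chebU 0 = 1"
| "chebU (Suc 0) = [:0,1:]"
| "chebU (Suc (Suc k)) = [:0,1:] * chebU (Suc k) - chebU k"

fun chebV :: "nat \<Rightarrow> 'a::comm_ring_1 poly" where
  "chebV 0 = 1"
| "chebV (Suc 0) = [:1,1:]"
| "chebV (Suc (Suc k)) = [:0,1:] * chebV (Suc k) - chebV k"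

lemma x_mult_pCons: "[:0,1:] * p = pCons 0 (p :: 'a::comm_semiring_1 poly)"
  by simp

lemma coeff_x_mult: "coeff ([:0,1:] * p) (Suc m) = coeff (p :: 'a::comm_semiring_1 poly) m" "coeff ([:0,1:] * p) 0 = 0"
  by (simp_all only: x_mult_pCons coeff_pCons_Suc coeff_pCons_0)

lemma chebU_coeff: "coeff (chebU k :: 'a::comm_ring_1 poly) k = 1 \<and> (\<forall>m>k. coeff (chebU k :: 'a poly) m = 0)"
proof (induction k rule: chebU.induct)
  case 1 then show ?case by (auto simp: coeff_1)
next
  case 2 then show ?case by (auto simp: coeff_pCons split: nat.splits)
next
  case (3 k)
  show ?case
  proof (intro conjI allI impI)
    show "coeff (chebU (Suc (Suc k)) :: 'a poly) (Suc (Suc k)) = 1"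
      using 3 by (simp add: coeff_x_mult)
    fix m assume m: "m > Suc (Suc k)"
    then obtain m' where "m = Suc m'" by (cases m) auto
    then show "coeff (chebU (Suc (Suc k)) :: 'a poly) m = 0"
      using 3 m by (simp add: coeff_x_mult)
  qed
qed

lemma chebV_coeff: "coeff (chebV k :: 'a::comm_ring_1 poly) k = 1 \<and> (\<forall>m>k. coeff (chebV k :: 'a poly) m = 0)"
proof (induction k rule: chebV.induct)
  case 1 then show ?case by (auto simp: coeff_1)
next
  case 2 then show ?case by (auto simp: coeff_pCons split: nat.splits)
next
  case (3 k)
  show ?case
  proof (intro conjI allI impI)
    show "coeff (chebV (Suc (Suc k)) :: 'a poly) (Suc (Suc k)) = 1"
      using 3 by (simp add: coeff_x_mult)
    fix m assume m: "m > Suc (Suc k)"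
    then obtain m' where "m = Suc m'" by (cases m) auto
    then show "coeff (chebV (Suc (Suc k)) :: 'a poly) m = 0"
      using 3 m by (simp add: coeff_x_mult)
  qed
qed

lemma chebU_degree: "degree (chebU k) \<le> k" and chebU_lc: "coeff (chebU k) k = 1"
  using chebU_coeff[of k] by (auto intro: degree_le)

lemma chebV_degree: "degree (chebV k) \<le> k" and chebV_lc: "coeff (chebV k) k = 1"
  using chebV_coeff[of k] by (auto intro: degree_le)

lemma chebU_eval:
  fixes h hi :: "'a::comm_ring_1"
  assumes hh: "h * hi = 1"
  shows "h ^ Suc k - hi ^ Suc k = (h - hi) * poly (chebU k) (h + hi)"
proof (induction k rule: chebU.induct)
  case 1 then show ?case by simp
next
  case 2
  have "h ^ 2 - hi ^ 2 = (h - hi) * (h + hi)" by (simp add: algebra_simps power2_eq_square)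
  then show ?case by (simp add: numeral_2_eq_2)
next
  case (3 k)
  have e1: "h * hi ^ Suc (Suc k) = hi ^ Suc k"
    by (simp add: mult.assoc[symmetric] hh)
  have e2: "hi * h ^ Suc (Suc k) = h ^ Suc k"
    by (simp add: mult.assoc[symmetric] hh mult.commute[of hi h])
  have "h ^ Suc (Suc (Suc k)) - hi ^ Suc (Suc (Suc k))
      = (h + hi) * (h ^ Suc (Suc k) - hi ^ Suc (Suc k)) - (h ^ Suc k - hi ^ Suc k)"
    using e1 e2 by (simp add: algebra_simps)
  also have "\<dots> = (h + hi) * ((h - hi) * poly (chebU (Suc k)) (h + hi)) - (h - hi) * poly (chebU k) (h + hi)"
    using 3 by simp
  also have "\<dots> = (h - hi) * poly (chebU (Suc (Suc k))) (h + hi)"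
    by (simp add: algebra_simps)
  finally show ?case .
qed

lemma chebV_eval:
  fixes h hi :: "'a::comm_ring_1"
  assumes hh: "h * hi = 1"
  shows "h ^ (2 * k + 1) - hi ^ (2 * k + 1) = (h - hi) * poly (chebV k) (h^2 + hi^2)"
proof (induction k rule: chebV.induct)
  case 1 then show ?case by simp
next
  case 2
  have "h ^ 3 - hi ^ 3 = (h - hi) * (h^2 + h * hi + hi^2)" by (simp add: algebra_simps power2_eq_square power3_eq_cube)
  also have "\<dots> = (h - hi) * poly (chebV 1) (h^2 + hi^2)" by (simp add: hh algebra_simps)
  finally show ?case by simp
next
  case (3 k)
  have e1: "h^2 * hi ^ (2 * Suc k + 1) = hi ^ (2 * k + 1)"
  proof -
    have "hi ^ (2 * Suc k + 1) = hi^2 * hi ^ (2 * k + 1)" by (simp add: power2_eq_square mult.assoc)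
    then show ?thesis by (simp add: mult.assoc[symmetric] power_mult_distrib[symmetric] hh)
  qed
  have e2: "hi^2 * h ^ (2 * Suc k + 1) = h ^ (2 * k + 1)"
  proof -
    have "h ^ (2 * Suc k + 1) = h^2 * h ^ (2 * k + 1)" by (simp add: power2_eq_square mult.assoc)
    then show ?thesis by (simp add: mult.assoc[symmetric] power_mult_distrib[symmetric] hh mult.commute[of hi h])
  qed
  have e3: "h ^ (2 * Suc (Suc k) + 1) = h^2 * h ^ (2 * Suc k + 1)" "hi ^ (2 * Suc (Suc k) + 1) = hi^2 * hi ^ (2 * Suc k + 1)"
    by (simp_all add: power2_eq_square mult.assoc)
  have "h ^ (2 * Suc (Suc k) + 1) - hi ^ (2 * Suc (Suc k) + 1)
      = (h^2 + hi^2) * (h ^ (2 * Suc k + 1) - hi ^ (2 * Suc k + 1)) - (h ^ (2 * k + 1) - hi ^ (2 * k + 1))"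
    unfolding e3 using e1 e2 by (simp add: algebra_simps)
  also have "\<dots> = (h^2 + hi^2) * ((h - hi) * poly (chebV (Suc k)) (h^2 + hi^2)) - (h - hi) * poly (chebV k) (h^2 + hi^2)"
    using 3 by simp
  also have "\<dots> = (h - hi) * poly (chebV (Suc (Suc k))) (h^2 + hi^2)"
    by (simp add: algebra_simps)
  finally show ?case .
qed


lemma det_const_poly: "det (map_mat (\<lambda>c. [:c:]) A) = [:det (A :: 'a::comm_ring_1 mat):]"
proof -
  interpret cpoly: comm_ring_hom "\<lambda>c::'a. [:c:]"
    by unfold_locales (simp_all add: mult_to_poly one_pCons)
  show ?thesis by (rule cpoly.hom_det)
qed

definition skipi :: "nat \<Rightarrow> nat \<Rightarrow> nat" where "skipi k j = (if j < k then j else Suc j)"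

lemma vand_dvd_skip:
  fixes z :: "nat \<Rightarrow> 'a::comm_ring_1" and p :: "nat \<Rightarrow> 'a poly"
  assumes deg: "\<And>j. j \<le> n \<Longrightarrow> degree (p j) \<le> j" and lc: "\<And>j. j \<le> n \<Longrightarrow> coeff (p j) j = 1"
    and kn: "k \<le> n"
  shows "vand n z dvd det (mat n n (\<lambda>(i,j). poly (p (skipi k j)) (z i)))"
proof -
  define E where "E k = det (mat n n (\<lambda>(i,j). poly (p (skipi k j)) (z i)))" for k
  define pt :: "nat \<Rightarrow> 'a poly" where "pt i = (if i < n then [:z i:] else [:0,1:])" for i
  define pp :: "nat \<Rightarrow> 'a poly poly" where "pp j = map_poly (\<lambda>c. [:c:]) (p j)" for j
  define big where "big = mat (Suc n) (Suc n) (\<lambda>(i,j). poly (pp j) (pt i))"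
  define Q where "Q = (\<Prod>i'<n. [:0,1:] - [:z i':])"
  define V where "V = vand n z"
  have big: "big \<in> carrier_mat (Suc n) (Suc n)" unfolding big_def by simp
  have "det big = vand (Suc n) pt"
    unfolding big_def
  proof (rule det_vandermonde_poly)
    fix j assume "j < Suc n"
    then show "degree (pp j) \<le> j" unfolding pp_def using deg[of j] map_poly_degree_leq[of _ "p j"]
      by (meson le_trans less_Suc_eq_le)
    show "coeff (pp j) j = 1" unfolding pp_def using lc[of j] \<open>j < Suc n\<close> by (simp add: coeff_map_poly)
  qed
  also have "\<dots> = [:V:] * Q"
  proof -
    have "vand n pt = (\<Prod>i<n. \<Prod>i'<i. [:z i - z i':])" unfolding vand_def
      by (intro prod.cong refl) (simp add: pt_def diff_to_poly)
    also have "\<dots> = [:V:]" unfolding V_def vand_def by (simp only: prod_to_poly)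
    finally have "vand n pt = [:V:]" .
    moreover have "vand (Suc n) pt = vand n pt * (\<Prod>i'<n. pt n - pt i')"
      unfolding vand_def by simp
    ultimately show ?thesis unfolding Q_def pt_def by simp
  qed
  finally have detbig: "det big = [:V:] * Q" .
  have "det big = (\<Sum>j<Suc n. big $$ (n,j) * cofactor big n j)"
    by (rule laplace_expansion_row[OF big]) simp
  also have "\<dots> = (\<Sum>j<Suc n. p j * [:(-1)^(n+j) * E j:])"
  proof (intro sum.cong refl)
    fix j assume j: "j \<in> {..<Suc n}"
    have "big $$ (n,j) = p j" unfolding big_def pp_def pt_def using j
      by (simp add: pcompose_altdef[symmetric] pcompose_idR)
    moreover have "mat_delete big n j = map_mat (\<lambda>c. [:c:]) (mat n n (\<lambda>(i,j'). poly (p (skipi j j')) (z i)))"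
      unfolding mat_delete_def big_def pp_def pt_def skipi_def
      by (rule eq_matI) (auto simp: pcompose_altdef[symmetric] pcompose_pCons_0)
    ultimately show "big $$ (n,j) * cofactor big n j = p j * [:(-1)^(n+j) * E j:]"
    proof -
      have c: "[:(-1)^(n+j) * E j:] = (-1)^(n+j) * [:E j:]"
        by (cases "even (n+j)") auto
      show ?thesis unfolding cofactor_def c
        using \<open>big $$ (n,j) = p j\<close> \<open>mat_delete big n j = _\<close>
        by (simp only: det_const_poly E_def)
    qed
  qed
  finally have ident: "(\<Sum>j<Suc n. p j * [:(-1)^(n+j) * E j:]) = [:V:] * Q" using detbig by simp
  have coeffid: "(\<Sum>j<Suc n. coeff (p j) k' * ((-1)^(n+j) * E j)) = V * coeff Q k'" for k'
  proof -
    have "coeff (\<Sum>j<Suc n. p j * [:(-1)^(n+j) * E j:]) k' = coeff ([:V:] * Q) k'"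
      using ident by simp
    then show ?thesis by (simp add: coeff_sum mult_ac del: sum.lessThan_Suc)
  qed
  have key: "V dvd E k" if k: "k \<le> n" and IH: "\<And>j. k < j \<Longrightarrow> j \<le> n \<Longrightarrow> V dvd E j" for k
  proof -
    define f where "f j = coeff (p j) k * ((-1)^(n+j) * E j)" for j
    have S: "(\<Sum>j<Suc n. f j) = f k + (\<Sum>j\<in>{..<Suc n} - {k}. f j)"
      using k by (subst sum.remove[of _ k]) auto
    have rest: "V dvd (\<Sum>j\<in>{..<Suc n} - {k}. f j)"
    proof (rule dvd_sum)
      fix j assume j: "j \<in> {..<Suc n} - {k}"
      show "V dvd f j"
      proof (cases "j < k")
        case True
        then have "coeff (p j) k = 0" using deg[of j] j by (intro coeff_eq_0) auto
        then show ?thesis unfolding f_def by simp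
      next
        case False
        then have "V dvd E j" using IH j by auto
        then show ?thesis unfolding f_def by simp
      qed
    qed
    have "V dvd (\<Sum>j<Suc n. f j)" using coeffid[of k] unfolding f_def by simp
    then have "V dvd f k" using S rest by (metis add_diff_cancel_right' dvd_diff)
    then have "V dvd (-1)^(n+k) * f k" by simp
    moreover have "(-1)^(n+k) * f k = E k" unfolding f_def using lc[OF k]
      by (simp add: mult.assoc[symmetric] power_mult_distrib[symmetric])
    ultimately show ?thesis by simp
  qed
  have "V dvd E k'" if "k' \<le> n" for k'
    using that
  proof (induction "n - k'" arbitrary: k' rule: less_induct)
    case less
    show ?case
    proof (rule key[OF less.prems])
      fix j assume "k' < j" "j \<le> n"
      then show "V dvd E j" using less.hyps[of j] by auto
    qed
  qed
  then show ?thesis using kn unfolding V_def E_def by simp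
qed


lemma det_perm_cols:
  assumes p: "\<pi> permutes {0..<n}"
  shows "det (mat n n (\<lambda>(i,j). f i (\<pi> j))) = signof \<pi> * det (mat n n (\<lambda>(i,j). f i j))"
proof -
  let ?B = "mat n n (\<lambda>(i,j). f j i)"
  have B: "?B \<in> carrier_mat n n" by simp
  have "det (mat n n (\<lambda>(i,j). f i (\<pi> j))) = det (transpose_mat (mat n n (\<lambda>(i,j). f i (\<pi> j))))"
    by (rule det_transpose[symmetric, of _ n]) simp
  also have "transpose_mat (mat n n (\<lambda>(i,j). f i (\<pi> j))) = mat n n (\<lambda>(i,j). ?B $$ (\<pi> i, j))"
    using permutes_in_image[OF p] by (intro eq_matI) auto
  also have "det \<dots> = signof \<pi> * det ?B" by (rule det_permute_rows[OF B p])
  also have "det ?B = det (mat n n (\<lambda>(i,j). f i j))"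
  proof -
    have "?B = transpose_mat (mat n n (\<lambda>(i,j). f i j))" by (intro eq_matI) auto
    then show ?thesis using det_transpose[of "mat n n (\<lambda>(i,j). f i j)" n] by simp
  qed
  finally show ?thesis .
qed

definition revp :: "nat \<Rightarrow> nat \<Rightarrow> nat" where "revp n j = (if j < n then n - 1 - j else j)"

lemma revp_permutes: "revp n permutes {0..<n}"
proof -
  have "bij_betw (revp n) {0..<n} {0..<n}"
    by (rule bij_betw_byWitness[where f'="revp n"]) (auto simp: revp_def)
  then show ?thesis
    by (rule bij_imp_permutes) (auto simp: revp_def)
qed

lemma revp_revp: "j < n \<Longrightarrow> revp n (revp n j) = j" by (auto simp: revp_def)

lemma det_rev_cols:
  "det (mat n n (\<lambda>(i,j). f i j)) = signof (revp n) * det (mat n n (\<lambda>(i,j). f i (revp n j)))"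
proof -
  have "det (mat n n (\<lambda>(i,j). f i (revp n (revp n j)))) = signof (revp n) * det (mat n n (\<lambda>(i,j). f i (revp n j)))"
    using det_perm_cols[OF revp_permutes, where f="\<lambda>i j. f i (revp n j)"] by simp
  moreover have "mat n n (\<lambda>(i,j). f i (revp n (revp n j))) = mat n n (\<lambda>(i,j). f i j)"
    by (intro eq_matI) (auto simp: revp_revp)
  ultimately show ?thesis by simp
qed


type_synonym RR = "(nat \<Rightarrow>\<^sub>0 int) \<Rightarrow>\<^sub>0 int"

definition hv :: "nat \<Rightarrow> int \<Rightarrow> RR" where
  "hv i k = Poly_Mapping.single (Poly_Mapping.single i k) 1"

definition kv :: "nat \<Rightarrow> (nat \<Rightarrow> int) \<Rightarrow> (nat \<Rightarrow>\<^sub>0 int)" where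
  "kv n v = (\<Sum>i<n. Poly_Mapping.single i (v i))"

lemma hv_mult: "hv i a * hv i b = hv i (a + b)"
  unfolding hv_def by (simp add: mult_single single_add)

lemma hv_zero: "hv i 0 = 1"
  unfolding hv_def by simp

lemma hv_pow_pos: "hv i (int m) = hv i 1 ^ m"
  by (induction m) (simp_all add: hv_zero hv_mult[symmetric] mult.commute)

lemma hv_pow_neg: "hv i (- int m) = hv i (-1) ^ m"
proof (induction m)
  case 0 then show ?case by (simp add: hv_zero)
next
  case (Suc m)
  have "hv i (- int (Suc m)) = hv i (-1) * hv i (- int m)" by (simp add: hv_mult)
  then show ?case using Suc by simp
qed

lemma hv_inv: "hv i 1 * hv i (-1) = 1"
  by (simp add: hv_mult hv_zero)

lemma prod_hv: "(\<Prod>i<n. hv i (v i)) = Poly_Mapping.single (kv n v) 1"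
proof (induction n)
  case 0 then show ?case by (simp add: kv_def)
next
  case (Suc n)
  then show ?case by (simp add: kv_def hv_def mult_single)
qed

definition AR :: "nat \<Rightarrow> (nat \<Rightarrow> int) \<Rightarrow> RR" where
  "AR n \<mu> = (\<Sum>w\<in>weylB n. of_int (weyl_sgn n w) * Poly_Mapping.single (kv n (weyl_act w \<mu>)) 1)"

lemma AR_det: "AR n \<mu> = det (mat n n (\<lambda>(i,j). hv i (\<mu> j) - hv i (- \<mu> j)))"
  unfolding AR_def weyl_sum_det[symmetric] prod_hv[symmetric] weyl_act_def by simp


abbreviation "hp i \<equiv> hv i 1"
abbreviation "hm i \<equiv> hv i (-1)"
definition ZR :: "nat \<Rightarrow> RR" where "ZR i = hp i ^ 2 + hm i ^ 2"

lemma rhoB_rev: "j < n \<Longrightarrow> rhoB n (revp n j) = int (2 * j + 1)"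
  by (auto simp: rhoB_def revp_def of_nat_diff)

lemma lamrho_rev: "j < n \<Longrightarrow> three_omega_n n (revp n j) + rhoB n (revp n j) = int (2 * Suc (Suc j))"
  by (auto simp: rhoB_def revp_def three_omega_n_def of_nat_diff)

lemma AR_rho: "AR n (rhoB n) = signof (revp n) * ((\<Prod>i<n. hp i - hm i) * vand n ZR)"
proof -
  have "AR n (rhoB n) = signof (revp n) * det (mat n n (\<lambda>(i,j). hv i (rhoB n (revp n j)) - hv i (- rhoB n (revp n j))))"
    unfolding AR_det by (rule det_rev_cols)
  also have "mat n n (\<lambda>(i,j). hv i (rhoB n (revp n j)) - hv i (- rhoB n (revp n j)))
      = mat n n (\<lambda>(i,j). (hp i - hm i) * poly (chebV j) (ZR i))"
  proof (rule eq_matI)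
    fix i j assume i: "i < dim_row (mat n n (\<lambda>(i,j). (hp i - hm i) * poly (chebV j) (ZR i)))"
      and j: "j < dim_col (mat n n (\<lambda>(i,j). (hp i - hm i) * poly (chebV j) (ZR i)))"
    have "hv i (rhoB n (revp n j)) - hv i (- rhoB n (revp n j)) = hp i ^ (2 * j + 1) - hm i ^ (2 * j + 1)"
      using j by (simp add: rhoB_rev hv_pow_pos hv_pow_neg del: of_nat_Suc of_nat_add of_nat_mult)
    also have "\<dots> = (hp i - hm i) * poly (chebV j) (ZR i)"
      unfolding ZR_def by (rule chebV_eval[OF hv_inv])
    finally show "mat n n (\<lambda>(i,j). hv i (rhoB n (revp n j)) - hv i (- rhoB n (revp n j))) $$ (i,j)
       = mat n n (\<lambda>(i,j). (hp i - hm i) * poly (chebV j) (ZR i)) $$ (i,j)" using i j by simp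
  qed auto
  also have "det (mat n n (\<lambda>(i,j). (hp i - hm i) * poly (chebV j) (ZR i))) = (\<Prod>i<n. hp i - hm i) * vand n ZR"
    by (subst det_rowscale) (simp add: det_vandermonde_poly chebV_degree chebV_lc)
  finally show ?thesis .
qed

lemma AR_lamrho: "AR n (\<lambda>i. three_omega_n n i + rhoB n i) = signof (revp n) * ((\<Prod>i<n. hp i ^ 2 - hm i ^ 2) *
    det (mat n n (\<lambda>(i,j). poly (chebU (skipi 0 j)) (ZR i))))"
proof -
  have "AR n (\<lambda>i. three_omega_n n i + rhoB n i) = signof (revp n) * det (mat n n (\<lambda>(i,j).
     hv i (three_omega_n n (revp n j) + rhoB n (revp n j)) - hv i (- (three_omega_n n (revp n j) + rhoB n (revp n j)))))"
    unfolding AR_det by (rule det_rev_cols)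
  also have "mat n n (\<lambda>(i,j). hv i (three_omega_n n (revp n j) + rhoB n (revp n j)) - hv i (- (three_omega_n n (revp n j) + rhoB n (revp n j))))
      = mat n n (\<lambda>(i,j). (hp i ^ 2 - hm i ^ 2) * poly (chebU (skipi 0 j)) (ZR i))"
  proof (rule eq_matI)
    fix i j assume i: "i < dim_row (mat n n (\<lambda>(i,j). (hp i ^ 2 - hm i ^ 2) * poly (chebU (skipi 0 j)) (ZR i)))"
      and j: "j < dim_col (mat n n (\<lambda>(i,j). (hp i ^ 2 - hm i ^ 2) * poly (chebU (skipi 0 j)) (ZR i)))"
    have hh: "hp i ^ 2 * hm i ^ 2 = 1" using hv_inv[of i] by (simp add: power_mult_distrib[symmetric])
    have "hv i (three_omega_n n (revp n j) + rhoB n (revp n j)) - hv i (- (three_omega_n n (revp n j) + rhoB n (revp n j)))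
       = hp i ^ (2 * Suc (Suc j)) - hm i ^ (2 * Suc (Suc j))"
      using j by (simp only: lamrho_rev[of j n] hv_pow_pos hv_pow_neg index_mat dim_col_mat)
    also have "\<dots> = (hp i ^ 2) ^ Suc (Suc j) - (hm i ^ 2) ^ Suc (Suc j)"
      by (simp only: power_mult)
    also have "\<dots> = (hp i ^ 2 - hm i ^ 2) * poly (chebU (Suc j)) (ZR i)"
      unfolding ZR_def by (rule chebU_eval[OF hh])
    finally show "mat n n (\<lambda>(i,j). hv i (three_omega_n n (revp n j) + rhoB n (revp n j)) - hv i (- (three_omega_n n (revp n j) + rhoB n (revp n j)))) $$ (i,j)
       = mat n n (\<lambda>(i,j). (hp i ^ 2 - hm i ^ 2) * poly (chebU (skipi 0 j)) (ZR i)) $$ (i,j)" using i j by (simp add: skipi_def)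
  qed auto
  also have "det (mat n n (\<lambda>(i,j). (hp i ^ 2 - hm i ^ 2) * poly (chebU (skipi 0 j)) (ZR i)))
     = (\<Prod>i<n. hp i ^ 2 - hm i ^ 2) * det (mat n n (\<lambda>(i,j). poly (chebU (skipi 0 j)) (ZR i)))"
    by (rule det_rowscale)
  finally show ?thesis .
qed

lemma AR_exists: "\<exists>M. AR n (rhoB n) * M = AR n (\<lambda>i. three_omega_n n i + rhoB n i)"
proof -
  have "vand n ZR dvd det (mat n n (\<lambda>(i,j). poly (chebU (skipi 0 j)) (ZR i)))"
    by (rule vand_dvd_skip) (auto simp: chebU_degree chebU_lc)
  then obtain S where S: "det (mat n n (\<lambda>(i,j). poly (chebU (skipi 0 j)) (ZR i))) = vand n ZR * S"
    by (auto elim: dvdE)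
  have "(\<Prod>i<n. hp i ^ 2 - hm i ^ 2) = (\<Prod>i<n. hp i - hm i) * (\<Prod>i<n. hp i + hm i)"
    by (simp add: prod.distrib[symmetric] power2_eq_square algebra_simps)
  then have "AR n (rhoB n) * ((\<Prod>i<n. hp i + hm i) * S) = AR n (\<lambda>i. three_omega_n n i + rhoB n i)"
    unfolding AR_rho AR_lamrho S by (simp add: mult_ac)
  then show ?thesis by blast
qed


lemma lookup_single_mult:
  fixes a :: "'k::ab_group_add" and c :: "'b::comm_ring_1"
  shows "Poly_Mapping.lookup (Poly_Mapping.single a c * P) k = c * Poly_Mapping.lookup P (k - a)"
proof -
  have "Poly_Mapping.lookup (Poly_Mapping.single a c * P) k
      = (\<Sum>l. (c when a = l) * (\<Sum>q. Poly_Mapping.lookup P q when k = l + q))"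
    by (simp add: lookup_mult lookup_single)
  also have "\<dots> = (\<Sum>l. (c * (\<Sum>q. Poly_Mapping.lookup P q when k = l + q)) when a = l)"
    by (simp add: when_mult)
  also have "\<dots> = c * (\<Sum>q. Poly_Mapping.lookup P q when k = a + q)" by simp
  also have "(\<Sum>q. Poly_Mapping.lookup P q when k = a + q) = (\<Sum>q. Poly_Mapping.lookup P q when q = k - a)"
    by (intro Sum_any.cong) (auto simp: when_def algebra_simps)
  also have "\<dots> = Poly_Mapping.lookup P (k - a)" by simp
  finally show ?thesis .
qed

definition KK :: "nat \<Rightarrow> (nat \<Rightarrow> int) set" where "KK n = {\<mu>. \<forall>i\<ge>n. \<mu> i = 0}"

lemma lookup_kv: "Poly_Mapping.lookup (kv n v) i = (if i < n then v i else 0)"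
  unfolding kv_def lookup_sum by (simp add: lookup_single when_def)

lemma lookup_kv_fun: "v \<in> KK n \<Longrightarrow> Poly_Mapping.lookup (kv n v) = v"
  by (auto simp: lookup_kv KK_def fun_eq_iff)

lemma kv_diff: "kv n a - kv n b = kv n (\<lambda>i. a i - b i)"
  unfolding kv_def by (simp add: sum_subtractf single_diff)

lemma kv_inj: "a \<in> KK n \<Longrightarrow> b \<in> KK n \<Longrightarrow> kv n a = kv n b \<Longrightarrow> a = b"
  by (metis lookup_kv_fun)

lemma kv_lookup: "(\<And>i. i \<ge> n \<Longrightarrow> Poly_Mapping.lookup k i = 0) \<Longrightarrow> kv n (Poly_Mapping.lookup k) = k"
  by (rule poly_mapping_eqI) (auto simp: lookup_kv)

lemma weyl_act_KK:
  assumes "w \<in> weylB n" "\<nu> \<in> KK n" shows "weyl_act w \<nu> \<in> KK n"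
proof -
  obtain \<sigma> e where w: "w = (\<sigma>, e)" "\<sigma> permutes {..<n}" "\<forall>i\<ge>n. e i = 1"
    using assms(1) unfolding weylB_def by auto
  show ?thesis using w assms(2) unfolding KK_def weyl_act_def
    by (auto simp: permutes_not_in)
qed

lemma rhoB_KK: "rhoB n \<in> KK n" by (simp add: KK_def rhoB_def)
lemma lamrho_KK: "(\<lambda>i. three_omega_n n i + rhoB n i) \<in> KK n"
  by (simp add: KK_def rhoB_def three_omega_n_def)

lemma finite_weylB: "finite (weylB n)"
  unfolding weylB_eq by (intro finite_cartesian_product finite_permutations signsE_finite) auto

lemma lookup_AR_mult:
  "Poly_Mapping.lookup (AR n \<nu> * P) k = (\<Sum>w\<in>weylB n. weyl_sgn n w * Poly_Mapping.lookup P (k - kv n (weyl_act w \<nu>)))"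
proof -
  have "AR n \<nu> * P = (\<Sum>w\<in>weylB n. Poly_Mapping.single (kv n (weyl_act w \<nu>)) (weyl_sgn n w) * P)"
    unfolding AR_def sum_distrib_right
    by (intro sum.cong refl) (simp add: single_of_int[symmetric] mult_single del: single_of_int)
  then show ?thesis by (simp add: lookup_sum lookup_single_mult)
qed

lemma lookup_AR:
  "Poly_Mapping.lookup (AR n \<nu>) k = (\<Sum>w\<in>weylB n. weyl_sgn n w * (if kv n (weyl_act w \<nu>) = k then 1 else 0))"
  using lookup_AR_mult[of n \<nu> 1 k] by (simp add: lookup_one when_def) (auto intro!: sum.cong)


abbreviation "lamrho n \<equiv> (\<lambda>i. three_omega_n n i + rhoB n i)"

lemma KK_diff: "a \<in> KK n \<Longrightarrow> b \<in> KK n \<Longrightarrow> (\<lambda>i. a i - b i) \<in> KK n"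
  by (simp add: KK_def)

lemma pointwise_outside:
  assumes mu: "\<mu> \<notin> KK n" and supp: "\<And>\<nu>. m \<nu> \<noteq> 0 \<Longrightarrow> \<nu> \<in> KK n"
  shows "(\<Sum>w\<in>weylB n. weyl_sgn n w * m (\<lambda>i. \<mu> i - weyl_act w (rhoB n) i)) = 0"
    and "(\<Sum>w\<in>weylB n. weyl_sgn n w * (if weyl_act w (lamrho n) = \<mu> then 1 else 0)) = (0::int)"
proof -
  obtain i where i: "i \<ge> n" "\<mu> i \<noteq> 0" using mu unfolding KK_def by auto
  show "(\<Sum>w\<in>weylB n. weyl_sgn n w * m (\<lambda>i. \<mu> i - weyl_act w (rhoB n) i)) = 0"
  proof (intro sum.neutral ballI)
    fix w assume w: "w \<in> weylB n"
    have "weyl_act w (rhoB n) \<in> KK n" by (rule weyl_act_KK[OF w rhoB_KK])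
    then have "(\<lambda>i. \<mu> i - weyl_act w (rhoB n) i) \<notin> KK n" using i unfolding KK_def by auto
    then show "weyl_sgn n w * m (\<lambda>i. \<mu> i - weyl_act w (rhoB n) i) = 0" using supp by auto
  qed
  show "(\<Sum>w\<in>weylB n. weyl_sgn n w * (if weyl_act w (lamrho n) = \<mu> then 1 else 0)) = (0::int)"
  proof (intro sum.neutral ballI)
    fix w assume w: "w \<in> weylB n"
    have "weyl_act w (lamrho n) \<in> KK n" by (rule weyl_act_KK[OF w lamrho_KK])
    then show "weyl_sgn n w * (if weyl_act w (lamrho n) = \<mu> then 1 else 0) = (0::int)" using mu by auto
  qed
qed

lemma charB_exists: "\<exists>m. is_charB n (three_omega_n n) m"
proof -
  obtain M where M: "AR n (rhoB n) * M = AR n (lamrho n)" using AR_exists by blast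
  define m where "m \<mu> = (if \<mu> \<in> KK n then Poly_Mapping.lookup M (kv n \<mu>) else 0)" for \<mu>
  have supp: "\<And>\<nu>. m \<nu> \<noteq> 0 \<Longrightarrow> \<nu> \<in> KK n" unfolding m_def by (auto split: if_splits)
  have fin: "finite {\<mu>. m \<mu> \<noteq> 0}"
  proof (rule finite_subset)
    show "{\<mu>. m \<mu> \<noteq> 0} \<subseteq> kv n -` Poly_Mapping.keys M \<inter> KK n"
      unfolding m_def by (auto simp: in_keys_iff split: if_splits)
    show "finite (kv n -` Poly_Mapping.keys M \<inter> KK n)"
      by (intro finite_vimage_IntI finite_keys) (auto intro: inj_onI kv_inj)
  qed
  have eq: "(\<Sum>w\<in>weylB n. weyl_sgn n w * m (\<lambda>i. \<mu> i - weyl_act w (rhoB n) i))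
          = (\<Sum>w\<in>weylB n. weyl_sgn n w * (if weyl_act w (lamrho n) = \<mu> then 1 else 0))" for \<mu>
  proof (cases "\<mu> \<in> KK n")
    case False
    then show ?thesis using pointwise_outside[OF False supp] by simp
  next
    case True
    have "(\<Sum>w\<in>weylB n. weyl_sgn n w * m (\<lambda>i. \<mu> i - weyl_act w (rhoB n) i))
        = (\<Sum>w\<in>weylB n. weyl_sgn n w * Poly_Mapping.lookup M (kv n \<mu> - kv n (weyl_act w (rhoB n))))"
    proof (intro sum.cong refl)
      fix w assume w: "w \<in> weylB n"
      have "(\<lambda>i. \<mu> i - weyl_act w (rhoB n) i) \<in> KK n"
        by (rule KK_diff[OF True weyl_act_KK[OF w rhoB_KK]])
      then show "weyl_sgn n w * m (\<lambda>i. \<mu> i - weyl_act w (rhoB n) i)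
          = weyl_sgn n w * Poly_Mapping.lookup M (kv n \<mu> - kv n (weyl_act w (rhoB n)))"
        unfolding m_def kv_diff by simp
    qed
    also have "\<dots> = Poly_Mapping.lookup (AR n (lamrho n)) (kv n \<mu>)"
      unfolding M[symmetric] lookup_AR_mult ..
    also have "\<dots> = (\<Sum>w\<in>weylB n. weyl_sgn n w * (if weyl_act w (lamrho n) = \<mu> then 1 else 0))"
      unfolding lookup_AR
    proof (intro sum.cong refl)
      fix w assume w: "w \<in> weylB n"
      have "weyl_act w (lamrho n) \<in> KK n" by (rule weyl_act_KK[OF w lamrho_KK])
      then have "(kv n (weyl_act w (lamrho n)) = kv n \<mu>) = (weyl_act w (lamrho n) = \<mu>)"
        using True kv_inj by blast
      then show "weyl_sgn n w * (if kv n (weyl_act w (lamrho n)) = kv n \<mu> then 1 else 0)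
          = weyl_sgn n w * (if weyl_act w (lamrho n) = \<mu> then 1 else 0)" by simp
    qed
    finally show ?thesis .
  qed
  have "is_charB n (three_omega_n n) m"
    unfolding is_charB_def using fin supp eq unfolding KK_def by blast
  then show ?thesis by blast
qed


lemma lookup_hv: "Poly_Mapping.lookup (hv i a) k = (if Poly_Mapping.single i a = k then 1 else 0)"
  unfolding hv_def by (simp add: lookup_single when_def)

lemma single_eq_iff_nat_int: "(Poly_Mapping.single (i::nat) (a::int) = Poly_Mapping.single j b) \<longleftrightarrow> (a = b \<and> (a = 0 \<or> i = j))"
  by (metis lookup_single_eq lookup_single_not_eq single_zero)

lemma AR_rho_nonzero: "AR n (rhoB n) \<noteq> 0"
proof -
  have s: "(signof (revp n) :: RR) \<noteq> 0" by (simp add: sign_def)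
  have a: "(\<Prod>i<n. hp i - hm i) \<noteq> 0"
  proof -
    have "hp i - hm i \<noteq> 0" for i
    proof
      assume "hp i - hm i = 0"
      then have "Poly_Mapping.lookup (hp i - hm i) (Poly_Mapping.single i 1) = 0" by simp
      then show False by (simp add: lookup_minus lookup_hv single_eq_iff_nat_int)
    qed
    then show ?thesis by (simp add: prod_zero_iff)
  qed
  have b: "vand n ZR \<noteq> 0"
  proof -
    have "ZR i - ZR i' \<noteq> 0" if "i' < i" for i i'
    proof
      have Z: "ZR j = hv j 2 + hv j (-2)" for j
        unfolding ZR_def power2_eq_square hv_mult by simp
      assume "ZR i - ZR i' = 0"
      then have "Poly_Mapping.lookup (ZR i - ZR i') (Poly_Mapping.single i 2) = 0" by simp
      then show False using that by (simp add: Z lookup_minus lookup_add lookup_hv single_eq_iff_nat_int)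
    qed
    then show ?thesis unfolding vand_def by (simp add: prod_zero_iff)
  qed
  show ?thesis unfolding AR_rho using s a b by simp
qed

definition toR :: "nat \<Rightarrow> ((nat \<Rightarrow> int) \<Rightarrow> int) \<Rightarrow> RR" where
  "toR n m = (\<Sum>\<mu>\<in>{\<mu>. m \<mu> \<noteq> 0}. Poly_Mapping.single (kv n \<mu>) (m \<mu>))"

lemma lookup_toR:
  assumes fin: "finite {\<mu>. m \<mu> \<noteq> 0}" and supp: "\<And>\<nu>. m \<nu> \<noteq> 0 \<Longrightarrow> \<nu> \<in> KK n"
  shows "Poly_Mapping.lookup (toR n m) k = (if (\<forall>i\<ge>n. Poly_Mapping.lookup k i = 0) then m (Poly_Mapping.lookup k) else 0)"
proof (cases "\<forall>i\<ge>n. Poly_Mapping.lookup k i = 0")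
  case True
  define \<nu> where "\<nu> = Poly_Mapping.lookup k"
  have nu: "\<nu> \<in> KK n" using True unfolding \<nu>_def KK_def by auto
  have k: "k = kv n \<nu>" unfolding \<nu>_def using True by (simp add: kv_lookup)
  have "Poly_Mapping.lookup (toR n m) k = (\<Sum>\<mu>\<in>{\<mu>. m \<mu> \<noteq> 0}. (if \<mu> = \<nu> then m \<mu> else 0))"
    unfolding toR_def lookup_sum
  proof (intro sum.cong refl)
    fix \<mu> assume "\<mu> \<in> {\<mu>. m \<mu> \<noteq> 0}"
    then have "\<mu> \<in> KK n" using supp by auto
    then have "(kv n \<mu> = k) = (\<mu> = \<nu>)" unfolding k using nu kv_inj by blast
    then show "Poly_Mapping.lookup (Poly_Mapping.single (kv n \<mu>) (m \<mu>)) k = (if \<mu> = \<nu> then m \<mu> else 0)"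
      by (simp add: lookup_single when_def)
  qed
  also have "\<dots> = m \<nu>" using fin by (simp add: sum.delta')
  finally show ?thesis using True \<nu>_def by simp
next
  case False
  then obtain i where i: "i \<ge> n" "Poly_Mapping.lookup k i \<noteq> 0" by auto
  have "Poly_Mapping.lookup (toR n m) k = 0"
    unfolding toR_def lookup_sum
  proof (intro sum.neutral ballI)
    fix \<mu> assume "\<mu> \<in> {\<mu>. m \<mu> \<noteq> 0}"
    have "kv n \<mu> \<noteq> k" using i by (auto simp: lookup_kv)
    then show "Poly_Mapping.lookup (Poly_Mapping.single (kv n \<mu>) (m \<mu>)) k = 0"
      by (simp add: lookup_single when_def)
  qed
  then show ?thesis using False by auto
qed

lemma charB_to_AR:
  assumes ch: "is_charB n (three_omega_n n) m"
  shows "AR n (rhoB n) * toR n m = AR n (lamrho n)"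
proof (rule poly_mapping_eqI)
  fix k
  have fin: "finite {\<mu>. m \<mu> \<noteq> 0}" and supp: "\<And>\<nu>. m \<nu> \<noteq> 0 \<Longrightarrow> \<nu> \<in> KK n"
    and eq: "\<And>\<mu>. (\<Sum>w\<in>weylB n. weyl_sgn n w * m (\<lambda>i. \<mu> i - weyl_act w (rhoB n) i))
          = (\<Sum>w\<in>weylB n. weyl_sgn n w * (if weyl_act w (lamrho n) = \<mu> then 1 else 0))"
    using ch unfolding is_charB_def KK_def by auto
  show "Poly_Mapping.lookup (AR n (rhoB n) * toR n m) k = Poly_Mapping.lookup (AR n (lamrho n)) k"
  proof (cases "\<forall>i\<ge>n. Poly_Mapping.lookup k i = 0")
    case True
    define \<mu> where "\<mu> = Poly_Mapping.lookup k"
    have mu: "\<mu> \<in> KK n" using True unfolding \<mu>_def KK_def by auto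
    have k: "k = kv n \<mu>" unfolding \<mu>_def using True by (simp add: kv_lookup)
    have "Poly_Mapping.lookup (AR n (rhoB n) * toR n m) k
        = (\<Sum>w\<in>weylB n. weyl_sgn n w * m (\<lambda>i. \<mu> i - weyl_act w (rhoB n) i))"
      unfolding lookup_AR_mult
    proof (intro sum.cong refl)
      fix w assume w: "w \<in> weylB n"
      have d: "(\<lambda>i. \<mu> i - weyl_act w (rhoB n) i) \<in> KK n"
        by (rule KK_diff[OF mu weyl_act_KK[OF w rhoB_KK]])
      then have "Poly_Mapping.lookup (toR n m) (k - kv n (weyl_act w (rhoB n))) = m (\<lambda>i. \<mu> i - weyl_act w (rhoB n) i)"
        unfolding k kv_diff by (subst lookup_toR[OF fin supp]) (auto simp: lookup_kv_fun KK_def)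
      then show "weyl_sgn n w * Poly_Mapping.lookup (toR n m) (k - kv n (weyl_act w (rhoB n)))
          = weyl_sgn n w * m (\<lambda>i. \<mu> i - weyl_act w (rhoB n) i)" by simp
    qed
    also have "\<dots> = (\<Sum>w\<in>weylB n. weyl_sgn n w * (if weyl_act w (lamrho n) = \<mu> then 1 else 0))"
      by (rule eq)
    also have "\<dots> = Poly_Mapping.lookup (AR n (lamrho n)) k"
      unfolding lookup_AR
    proof (intro sum.cong refl)
      fix w assume w: "w \<in> weylB n"
      have "weyl_act w (lamrho n) \<in> KK n" by (rule weyl_act_KK[OF w lamrho_KK])
      then have "(kv n (weyl_act w (lamrho n)) = k) = (weyl_act w (lamrho n) = \<mu>)"
        unfolding k using mu kv_inj by blast
      then show "weyl_sgn n w * (if weyl_act w (lamrho n) = \<mu> then 1 else 0)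
          = weyl_sgn n w * (if kv n (weyl_act w (lamrho n)) = k then 1 else 0)" by simp
    qed
    finally show ?thesis .
  next
    case False
    then obtain i where i: "i \<ge> n" "Poly_Mapping.lookup k i \<noteq> 0" by auto
    have "Poly_Mapping.lookup (AR n (rhoB n) * toR n m) k = 0"
      unfolding lookup_AR_mult
    proof (intro sum.neutral ballI)
      fix w assume w: "w \<in> weylB n"
      have "weyl_act w (rhoB n) \<in> KK n" by (rule weyl_act_KK[OF w rhoB_KK])
      then have "Poly_Mapping.lookup (k - kv n (weyl_act w (rhoB n))) i \<noteq> 0"
        using i by (simp add: lookup_minus lookup_kv)
      then have "Poly_Mapping.lookup (toR n m) (k - kv n (weyl_act w (rhoB n))) = 0"
        using i by (subst lookup_toR[OF fin supp]) auto
      then show "weyl_sgn n w * Poly_Mapping.lookup (toR n m) (k - kv n (weyl_act w (rhoB n))) = 0" by simp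
    qed
    moreover have "Poly_Mapping.lookup (AR n (lamrho n)) k = 0"
      unfolding lookup_AR
    proof (intro sum.neutral ballI)
      fix w assume w: "w \<in> weylB n"
      have "kv n (weyl_act w (lamrho n)) \<noteq> k" using i by (auto simp: lookup_kv)
      then show "weyl_sgn n w * (if kv n (weyl_act w (lamrho n)) = k then 1 else 0) = 0" by simp
    qed
    ultimately show ?thesis by simp
  qed
qed

lemma charB_unique:
  assumes "is_charB n (three_omega_n n) m1" "is_charB n (three_omega_n n) m2"
  shows "m1 = m2"
proof
  fix \<mu>
  have "AR n (rhoB n) * toR n m1 = AR n (rhoB n) * toR n m2"
    using charB_to_AR[OF assms(1)] charB_to_AR[OF assms(2)] by simp
  then have T: "toR n m1 = toR n m2" using AR_rho_nonzero by simp
  have f1: "finite {\<mu>. m1 \<mu> \<noteq> 0}" and s1: "\<And>\<nu>. m1 \<nu> \<noteq> 0 \<Longrightarrow> \<nu> \<in> KK n"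
    and f2: "finite {\<mu>. m2 \<mu> \<noteq> 0}" and s2: "\<And>\<nu>. m2 \<nu> \<noteq> 0 \<Longrightarrow> \<nu> \<in> KK n"
    using assms unfolding is_charB_def KK_def by auto
  show "m1 \<mu> = m2 \<mu>"
  proof (cases "\<mu> \<in> KK n")
    case True
    have "m1 \<mu> = Poly_Mapping.lookup (toR n m1) (kv n \<mu>)"
      using True by (subst lookup_toR[OF f1 s1]) (auto simp: lookup_kv_fun KK_def)
    also have "\<dots> = Poly_Mapping.lookup (toR n m2) (kv n \<mu>)" using T by simp
    also have "\<dots> = m2 \<mu>"
      using True by (subst lookup_toR[OF f2 s2]) (auto simp: lookup_kv_fun KK_def)
    finally show ?thesis .
  next
    case False
    then show ?thesis using s1 s2 by metis
  qed
qed

lemma charB_is: "is_charB n (three_omega_n n) (charB n (three_omega_n n))"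
  unfolding charB_def using charB_exists charB_unique by (metis theI)


abbreviation "qq \<equiv> qvar"

lemma qint_mult: "(1 - qq) * qint m = 1 - qq ^ m"
  unfolding qint_def by (simp add: one_diff_power_eq)

lemma fls_nth_one_minus_qpow: "m \<ge> 1 \<Longrightarrow> k \<le> 0 \<Longrightarrow> fls_nth (1 - qq ^ m) k = (if k = 0 then 1 else 0)"
  unfolding qvar_def by (simp add: power_mult[symmetric] fls_X_power_nth)

lemma one_minus_qpow_nz: "m \<ge> 1 \<Longrightarrow> 1 - qq ^ m \<noteq> 0"
  using fls_nth_one_minus_qpow[of m 0] by fastforce

lemma one_minus_qpow_subdeg: "m \<ge> 1 \<Longrightarrow> fls_subdegree (1 - qq ^ m) = 0"
proof (rule fls_subdegree_eqI)
  assume m: "m \<ge> 1"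
  show "fls_nth (1 - qq ^ m) 0 \<noteq> 0" using fls_nth_one_minus_qpow[OF m, of 0] by auto
  fix k :: int assume "k < 0"
  then show "fls_nth (1 - qq ^ m) k = 0" using fls_nth_one_minus_qpow[OF m, of k] by auto
qed

lemma qint_nz: "m \<ge> 1 \<Longrightarrow> qint m \<noteq> 0"
  using qint_mult[of m] one_minus_qpow_nz[of m] by auto

lemma one_minus_q_nz: "1 - qq \<noteq> 0"
  using one_minus_qpow_nz[of 1] by simp

lemma qfact_Suc: "qfact (Suc m) = qfact m * qint (Suc m)"
  unfolding qfact_def by (simp add: prod.atLeast1_atMost_eq prod.nat_ivl_Suc')

lemma qfact_nz: "qfact m \<noteq> 0"
  by (induction m) (simp_all add: qfact_Suc qint_nz, simp add: qfact_def)

lemma qCat_alt: "qCat k = qfact (2 * k) / (qfact k * qfact k * qint (k + 1))"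
  unfolding qCat_def qbinom_def by (simp add: mult_2 field_simps)

definition PP :: "nat \<Rightarrow> rat fls" where "PP n = qCat (n + 1) * (\<Prod>k=1..n. 1 + qq ^ k)"

lemma PP_0: "PP 0 = 1"
proof -
  have "qfact 2 = qint 2" "qfact 1 = 1" unfolding qfact_def qint_def by (simp_all add: numeral_2_eq_2)
  then show ?thesis unfolding PP_def qCat_alt using qint_nz[of 2] by (simp add: numeral_2_eq_2)
qed

lemma PP_Suc: "PP (Suc n) * ((1 - qq^(n+1)) * (1 - qq^(n+2)) * (1 - qq^(n+3)))
   = PP n * ((1 - qq^(2*n+2)) * (1 - qq^(2*n+3)) * (1 - qq^(2*n+4)))"
proof -
  define F where "F = qfact (n+1)"
  define e where "e = qfact (2*n+2)"
  have F2: "qfact (n+2) = F * qint (n+2)" unfolding F_def by (simp add: qfact_Suc)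
  have e2: "qfact (2*n+4) = e * qint (2*n+3) * qint (2*n+4)" unfolding e_def
    by (simp add: qfact_Suc numeral_eq_Suc)
  have nz: "F \<noteq> 0" "qint (n+2) \<noteq> 0" "qint (n+3) \<noteq> 0" "qint (n+1) \<noteq> 0"
    unfolding F_def by (simp_all add: qfact_nz qint_nz)
  have QC: "qCat (n+2) * qint (n+2) * qint (n+3) = qCat (n+1) * qint (2*n+3) * qint (2*n+4)"
  proof -
    have a: "qCat (n+2) = qfact (2*n+4) / (qfact (n+2) * qfact (n+2) * qint (n+3))"
      unfolding qCat_alt by (simp add: algebra_simps numeral_eq_Suc)
    have b: "qCat (n+1) = e / (F * F * qint (n+2))"
      unfolding qCat_alt e_def F_def by (simp add: algebra_simps numeral_eq_Suc)
    show ?thesis unfolding a b F2 e2 using nz by (simp add: field_simps)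
  qed
  have H: "(1 + qq^(n+1)) * qint (n+1) = qint (2*n+2)"
  proof -
    have "(1 - qq) * ((1 + qq^(n+1)) * qint (n+1)) = (1 - qq) * qint (2*n+2)"
      unfolding qint_mult mult.left_commute[of "1 - qq"]
      by (simp add: algebra_simps power_add[symmetric] mult_2 mult_2_right)
    then show ?thesis using one_minus_q_nz by simp
  qed
  have "PP (Suc n) * (qint (n+1) * qint (n+2) * qint (n+3))
      = PP n * (qint (2*n+2) * qint (2*n+3) * qint (2*n+4))"
  proof -
    have "PP (Suc n) = qCat (n+2) * (\<Prod>k=1..n. 1 + qq ^ k) * (1 + qq^(n+1))"
      unfolding PP_def by (simp add: prod.nat_ivl_Suc' numeral_eq_Suc)
    then have "PP (Suc n) * (qint (n+1) * qint (n+2) * qint (n+3))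
       = (qCat (n+2) * qint (n+2) * qint (n+3)) * (\<Prod>k=1..n. 1 + qq ^ k) * ((1 + qq^(n+1)) * qint (n+1))"
      by (simp add: mult_ac)
    also have "\<dots> = qCat (n+1) * qint (2*n+3) * qint (2*n+4) * (\<Prod>k=1..n. 1 + qq ^ k) * qint (2*n+2)"
      unfolding QC H ..
    also have "\<dots> = PP n * (qint (2*n+2) * qint (2*n+3) * qint (2*n+4))"
      unfolding PP_def by (simp add: mult_ac)
    finally show ?thesis .
  qed
  note E = this
  have "PP (Suc n) * ((1 - qq^(n+1)) * (1 - qq^(n+2)) * (1 - qq^(n+3)))
      = PP (Suc n) * (qint (n+1) * qint (n+2) * qint (n+3)) * (1 - qq)^3"
    unfolding qint_mult[symmetric] by (simp add: power3_eq_cube mult_ac)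
  also have "\<dots> = PP n * (qint (2*n+2) * qint (2*n+3) * qint (2*n+4)) * (1 - qq)^3"
    unfolding E ..
  also have "\<dots> = PP n * ((1 - qq^(2*n+2)) * (1 - qq^(2*n+3)) * (1 - qq^(2*n+4)))"
    unfolding qint_mult[symmetric] by (simp add: power3_eq_cube mult_ac)
  finally show ?thesis .
qed


definition Gq :: "nat \<Rightarrow> nat \<Rightarrow> rat fls" where
  "Gq c n = (\<Prod>k<n. (1 - qq^(2*k+1+c)) * (\<Prod>k'<k. 1 - qq^(k+k'+1+c)))"

lemma Gq_Suc: "Gq c (Suc n) = Gq c n * ((1 - qq^(2*n+1+c)) * (\<Prod>k'<n. 1 - qq^(n+k'+1+c)))"
  unfolding Gq_def by simp

lemma telescope3:
  fixes f :: "nat \<Rightarrow> 'a::comm_monoid_mult"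
  shows "(\<Prod>k<n. f (k+3)) * (f 0 * f 1 * f 2) = (\<Prod>k<n. f k) * (f n * f (n+1) * f (n+2))"
proof (induction n)
  case 0 then show ?case by (simp add: numeral_2_eq_2)
next
  case (Suc n)
  have "(\<Prod>k<Suc n. f (k+3)) * (f 0 * f 1 * f 2) = ((\<Prod>k<n. f (k+3)) * (f 0 * f 1 * f 2)) * f (n+3)"
    by (simp add: mult_ac)
  also have "\<dots> = (\<Prod>k<n. f k) * (f n * f (n+1) * f (n+2)) * f (n+3)" using Suc by simp
  also have "\<dots> = (\<Prod>k<Suc n. f k) * (f (Suc n) * f (Suc n+1) * f (Suc n+2))"
    by (simp add: mult_ac numeral_eq_Suc)
  finally show ?case .
qed

lemma Gq_identity: "Gq 3 n = PP n * Gq 0 n"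
proof (induction n)
  case 0 then show ?case by (simp add: Gq_def PP_0)
next
  case (Suc n)
  define f where "f k = 1 - qq^(n+k+1)" for k
  define A where "A = (1 - qq^(2*n+4)) * (\<Prod>k'<n. f (k'+3))"
  define B where "B = (1 - qq^(2*n+1)) * (\<Prod>k'<n. f k')"
  define T3 where "T3 = f 0 * f 1 * f 2"
  have GA: "Gq 3 (Suc n) = Gq 3 n * A"
    unfolding Gq_Suc A_def f_def by (simp add: ac_simps)
  have GB: "Gq 0 (Suc n) = Gq 0 n * B"
    unfolding Gq_Suc B_def f_def by (simp add: ac_simps)
  have fnz: "f k \<noteq> 0" for k unfolding f_def by (rule one_minus_qpow_nz) simp
  have T3nz: "T3 \<noteq> 0" unfolding T3_def using fnz[of 0] fnz[of 1] fnz[of 2] by (simp only: mult_eq_0_iff de_Morgan_disj) blast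
  have e: "n + n + 1 = 2*n+1" "n + (n+1) + 1 = 2*n+2" "n + (n+2) + 1 = 2*n+3" by simp_all
  have fn: "f n = 1 - qq^(2*n+1)" "f (n+1) = 1 - qq^(2*n+2)" "f (n+2) = 1 - qq^(2*n+3)"
    unfolding f_def e by (rule refl)+
  have "PP n * A * T3 = PP n * (1 - qq^(2*n+4)) * ((\<Prod>k'<n. f (k'+3)) * T3)"
    unfolding A_def by (simp add: mult_ac)
  also have "\<dots> = PP n * (1 - qq^(2*n+4)) * ((\<Prod>k<n. f k) * (f n * f (n+1) * f (n+2)))"
    unfolding T3_def telescope3 ..
  also have "\<dots> = (PP n * ((1 - qq^(2*n+2)) * (1 - qq^(2*n+3)) * (1 - qq^(2*n+4)))) * ((1 - qq^(2*n+1)) * (\<Prod>k<n. f k))"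
    unfolding fn by (simp add: mult_ac)
  also have "\<dots> = PP (Suc n) * T3 * B"
  proof -
    have T3eq: "T3 = (1 - qq^(n+1)) * (1 - qq^(n+2)) * (1 - qq^(n+3))"
      unfolding T3_def f_def by (simp add: numeral_eq_Suc)
    show ?thesis unfolding T3eq PP_Suc B_def ..
  qed
  finally have "PP n * A * T3 = PP (Suc n) * B * T3" by (simp add: mult_ac)
  then have AB: "PP n * A = PP (Suc n) * B" using T3nz by simp
  show ?case unfolding GA GB Suc using AB by (simp add: mult_ac)
qed


abbreviation XI :: "int \<Rightarrow> rat fls" where "XI \<equiv> fls_X_intpow"

definition ev :: "nat \<Rightarrow> (nat \<Rightarrow> int) \<Rightarrow> int" where
  "ev n v = (\<Sum>i<n. int (i + 1) * v i)"

definition Dfls :: "nat \<Rightarrow> (nat \<Rightarrow> int) \<Rightarrow> rat fls" where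
  "Dfls n \<nu> = (\<Sum>w\<in>weylB n. of_int (weyl_sgn n w) * XI (ev n (weyl_act w \<nu>)))"

lemma prod_XI: "(\<Prod>i<(n::nat). XI (f i)) = XI (\<Sum>i<n. f i)"
  by (induction n) (simp_all add: fls_X_intpow_times_fls_X_intpow)

lemma Dfls_det: "Dfls n \<nu> = det (mat n n (\<lambda>(i,j). XI (int (i+1) * \<nu> j) - XI (int (i+1) * (- \<nu> j))))"
proof -
  have "Dfls n \<nu> = (\<Sum>w\<in>weylB n. of_int (weyl_sgn n w) * (\<Prod>i<n. XI (int (i+1) * (snd w i * \<nu> (fst w i)))))"
    unfolding Dfls_def prod_XI ev_def weyl_act_def by simp
  also have "\<dots> = det (mat n n (\<lambda>(i,j). XI (int (i+1) * \<nu> j) - XI (int (i+1) * (- \<nu> j))))"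
    by (rule weyl_sum_det)
  finally show ?thesis .
qed

lemma XI_inv: "XI a * XI (- a) = 1"
  by (simp only: fls_X_intpow_times_fls_X_intpow) simp

lemma Dfls_eval:
  assumes nu: "\<And>j. j < n \<Longrightarrow> \<nu> (revp n j) = int (a j)"
  shows "Dfls n \<nu> = signof (revp n) * ((\<Prod>j<n. XI (int (a j)) - XI (- int (a j))) *
      vand n (\<lambda>j. XI (int (a j)) + XI (- int (a j))))"
proof -
  define y where "y j = XI (int (a j))" for j
  define yi where "yi j = XI (- int (a j))" for j
  have "Dfls n \<nu> = signof (revp n) * det (mat n n (\<lambda>(i,j). XI (int (i+1) * \<nu> (revp n j)) - XI (int (i+1) * (- \<nu> (revp n j)))))"
    unfolding Dfls_det by (rule det_rev_cols)
  also have "mat n n (\<lambda>(i,j). XI (int (i+1) * \<nu> (revp n j)) - XI (int (i+1) * (- \<nu> (revp n j))))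
     = transpose_mat (mat n n (\<lambda>(j,i). (y j - yi j) * poly (chebU i) (y j + yi j)))"
  proof (rule eq_matI)
    fix i j assume i: "i < dim_row (transpose_mat (mat n n (\<lambda>(j,i). (y j - yi j) * poly (chebU i) (y j + yi j))))"
      and j: "j < dim_col (transpose_mat (mat n n (\<lambda>(j,i). (y j - yi j) * poly (chebU i) (y j + yi j))))"
    have jn: "j < n" and "i < n" using i j by auto
    have "XI (int (i+1) * \<nu> (revp n j)) - XI (int (i+1) * (- \<nu> (revp n j))) = y j ^ Suc i - yi j ^ Suc i"
      unfolding y_def yi_def fls_X_intpow_power nu[OF jn] by simp
    also have "\<dots> = (y j - yi j) * poly (chebU i) (y j + yi j)"
      by (rule chebU_eval) (simp only: y_def yi_def XI_inv)
    finally show "mat n n (\<lambda>(i,j). XI (int (i+1) * \<nu> (revp n j)) - XI (int (i+1) * (- \<nu> (revp n j)))) $$ (i,j)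
       = transpose_mat (mat n n (\<lambda>(j,i). (y j - yi j) * poly (chebU i) (y j + yi j))) $$ (i,j)"
      using i j by simp
  qed auto
  also have "det \<dots> = det (mat n n (\<lambda>(j,i). (y j - yi j) * poly (chebU i) (y j + yi j)))"
    by (rule det_transpose[of _ n]) simp
  also have "\<dots> = (\<Prod>j<n. y j - yi j) * vand n (\<lambda>j. y j + yi j)"
    by (subst det_rowscale) (simp add: det_vandermonde_poly chebU_degree chebU_lc)
  finally show ?thesis unfolding y_def yi_def .
qed


lemma qq_XI: "qq ^ m = XI (2 * int m)"
  unfolding qvar_def power_mult[symmetric] fls_X_power_conv_shift_1 by (simp add: fls_X_intpow_power mult.commute)

lemma fact1: "XI (int a) - XI (- int a) = - XI (- int a) * (1 - qq ^ a)"
proof -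
  have "XI (- int a) * qq ^ a = XI (int a)"
    unfolding qq_XI fls_X_intpow_times_fls_X_intpow by simp
  then show ?thesis by (simp add: algebra_simps)
qed

lemma fact2:
  fixes a b :: int
  shows "XI a + XI (- a) - XI b - XI (- b) = XI (- a) * (1 - XI (a - b)) * (1 - XI (a + b))"
proof -
  have "XI (- a) * (1 - XI (a - b)) * (1 - XI (a + b))
      = XI (- a) - XI (- a) * XI (a - b) - XI (- a) * XI (a + b) + XI (- a) * XI (a - b) * XI (a + b)"
    by (simp add: algebra_simps)
  also have "\<dots> = XI (- a) - XI (- b) - XI b + XI a"
    by (simp only: fls_X_intpow_times_fls_X_intpow) (simp add: algebra_simps)
  finally show ?thesis by (simp add: algebra_simps)
qed

definition WW :: "nat \<Rightarrow> nat \<Rightarrow> rat fls" where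
  "WW c n = (\<Prod>k<n. - XI (- int (2*k+1+c)) * XI (- int (2*k+1+c)) ^ k)"

definition CC :: "nat \<Rightarrow> rat fls" where
  "CC n = (\<Prod>k<n. \<Prod>k'<k. 1 - qq ^ (k - k'))"

lemma Dfls_Gq:
  assumes nu: "\<And>j. j < n \<Longrightarrow> \<nu> (revp n j) = int (2*j+1+c)"
  shows "Dfls n \<nu> = signof (revp n) * (WW c n * CC n * Gq c n)"
proof -
  define a where "a k = 2*k+1+c" for k
  have D: "Dfls n \<nu> = signof (revp n) * ((\<Prod>j<n. XI (int (a j)) - XI (- int (a j))) *
      vand n (\<lambda>j. XI (int (a j)) + XI (- int (a j))))"
    by (rule Dfls_eval) (simp add: nu a_def)
  have P1: "(\<Prod>j<n. XI (int (a j)) - XI (- int (a j))) = (\<Prod>j<n. - XI (- int (a j)) * (1 - qq ^ (a j)))"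
    by (simp only: fact1)
  have V: "vand n (\<lambda>j. XI (int (a j)) + XI (- int (a j)))
     = (\<Prod>k<n. XI (- int (a k)) ^ k * ((\<Prod>k'<k. 1 - qq ^ (k - k')) * (\<Prod>k'<k. 1 - qq ^ (k+k'+1+c))))"
    unfolding vand_def
  proof (intro prod.cong refl)
    fix k assume "k \<in> {..<n}"
    have "(\<Prod>k'<k. XI (int (a k)) + XI (- int (a k)) - (XI (int (a k')) + XI (- int (a k'))))
        = (\<Prod>k'<k. XI (- int (a k)) * ((1 - qq ^ (k - k')) * (1 - qq ^ (k+k'+1+c))))"
    proof (intro prod.cong refl)
      fix k' assume k': "k' \<in> {..<k}"
      have e1: "int (a k) - int (a k') = 2 * int (k - k')" using k' by (simp add: a_def of_nat_diff)
      have e2: "int (a k) + int (a k') = 2 * int (k + k' + 1 + c)" by (simp add: a_def)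
      show "XI (int (a k)) + XI (- int (a k)) - (XI (int (a k')) + XI (- int (a k')))
          = XI (- int (a k)) * ((1 - qq ^ (k - k')) * (1 - qq ^ (k+k'+1+c)))"
        using fact2[of "int (a k)" "int (a k')"] unfolding qq_XI e1 e2 by (simp add: algebra_simps)
    qed
    also have "\<dots> = XI (- int (a k)) ^ k * ((\<Prod>k'<k. 1 - qq ^ (k - k')) * (\<Prod>k'<k. 1 - qq ^ (k+k'+1+c)))"
      by (simp add: prod.distrib)
    finally show "(\<Prod>k'<k. XI (int (a k)) + XI (- int (a k)) - (XI (int (a k')) + XI (- int (a k'))))
        = XI (- int (a k)) ^ k * ((\<Prod>k'<k. 1 - qq ^ (k - k')) * (\<Prod>k'<k. 1 - qq ^ (k+k'+1+c)))" .
  qed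
  have "(\<Prod>j<n. - XI (- int (a j)) * (1 - qq ^ (a j))) *
        (\<Prod>k<n. XI (- int (a k)) ^ k * ((\<Prod>k'<k. 1 - qq ^ (k - k')) * (\<Prod>k'<k. 1 - qq ^ (k+k'+1+c))))
      = WW c n * CC n * Gq c n"
    unfolding WW_def CC_def Gq_def a_def prod.distrib[symmetric]
    by (intro prod.cong refl) (simp only: prod.distrib mult_ac)
  then show ?thesis unfolding D P1 V by simp
qed

lemma WW_3: "WW 3 n = (\<Prod>k<n. XI (-3) ^ Suc k) * WW 0 n"
  unfolding WW_def prod.distrib[symmetric]
proof (intro prod.cong refl)
  fix k
  have "XI (- int (2*k+1+3)) = XI (-3) * XI (- int (2*k+1))"
    by (simp only: fls_X_intpow_times_fls_X_intpow) simp
  then show "- XI (- int (2*k+1+3)) * XI (- int (2*k+1+3)) ^ k = XI (-3) ^ Suc k * (- XI (- int (2*k+1+0)) * XI (- int (2*k+1+0)) ^ k)"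
    by (simp add: power_mult_distrib mult_ac)
qed


lemma ev_add: "ev n (\<lambda>i. a i + b i) = ev n a + ev n b"
  unfolding ev_def by (simp add: sum.distrib algebra_simps)

lemma psB_rel: "Dfls n (rhoB n) * psB n (three_omega_n n) = Dfls n (lamrho n)"
proof -
  define m where "m = charB n (three_omega_n n)"
  define S where "S = {\<mu>. m \<mu> \<noteq> 0}"
  define W where "W = weylB n"
  define sh where "sh w \<nu> = (\<lambda>i. \<nu> i + weyl_act w (rhoB n) i)" for w \<nu>
  define F where "F = (\<Union>w\<in>W. sh w ` S) \<union> ((\<lambda>w. weyl_act w (lamrho n)) ` W)"
  have ch: "is_charB n (three_omega_n n) m" unfolding m_def by (rule charB_is)
  have fin: "finite S" using ch unfolding is_charB_def S_def by auto
  have eq: "\<And>\<mu>. (\<Sum>w\<in>W. weyl_sgn n w * m (\<lambda>i. \<mu> i - weyl_act w (rhoB n) i))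
          = (\<Sum>w\<in>W. weyl_sgn n w * (if weyl_act w (lamrho n) = \<mu> then 1 else 0))"
    using ch unfolding is_charB_def W_def by auto
  have finW: "finite W" unfolding W_def by (rule finite_weylB)
  have finF: "finite F" unfolding F_def using fin finW by auto
  have psB: "psB n (three_omega_n n) = (\<Sum>\<nu>\<in>S. of_int (m \<nu>) * XI (ev n \<nu>))"
    unfolding psB_def S_def m_def ev_def ..
  have E: "(\<Sum>\<mu>\<in>F. of_int (\<Sum>w\<in>W. weyl_sgn n w * m (\<lambda>i. \<mu> i - weyl_act w (rhoB n) i)) * XI (ev n \<mu>))
      = (\<Sum>\<mu>\<in>F. of_int (\<Sum>w\<in>W. weyl_sgn n w * (if weyl_act w (lamrho n) = \<mu> then 1 else 0)) * XI (ev n \<mu>))"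
    using eq by simp
  have inner: "(\<Sum>\<mu>\<in>F. of_int (m (\<lambda>i. \<mu> i - weyl_act w (rhoB n) i)) * XI (ev n \<mu>))
      = XI (ev n (weyl_act w (rhoB n))) * psB n (three_omega_n n)" if w: "w \<in> W" for w
  proof -
    have sub: "sh w ` S \<subseteq> F" unfolding F_def using w by auto
    have "(\<Sum>\<mu>\<in>F. of_int (m (\<lambda>i. \<mu> i - weyl_act w (rhoB n) i)) * XI (ev n \<mu>))
        = (\<Sum>\<mu>\<in>sh w ` S. of_int (m (\<lambda>i. \<mu> i - weyl_act w (rhoB n) i)) * XI (ev n \<mu>))"
    proof (rule sum.mono_neutral_right[OF finF sub], rule ballI)
      fix \<mu> assume \<mu>: "\<mu> \<in> F - sh w ` S"
      show "of_int (m (\<lambda>i. \<mu> i - weyl_act w (rhoB n) i)) * XI (ev n \<mu>) = 0"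
      proof (cases "m (\<lambda>i. \<mu> i - weyl_act w (rhoB n) i) = 0")
        case False
        then have "(\<lambda>i. \<mu> i - weyl_act w (rhoB n) i) \<in> S" unfolding S_def by simp
        moreover have "sh w (\<lambda>i. \<mu> i - weyl_act w (rhoB n) i) = \<mu>" unfolding sh_def by simp
        ultimately have "\<mu> \<in> sh w ` S" by (metis image_eqI)
        then show ?thesis using \<mu> by simp
      qed simp
    qed
    also have "\<dots> = (\<Sum>\<nu>\<in>S. of_int (m (\<lambda>i. sh w \<nu> i - weyl_act w (rhoB n) i)) * XI (ev n (sh w \<nu>)))"
    proof (rule sum.reindex[unfolded comp_def])
      show "inj_on (sh w) S"
      proof (rule inj_onI)
        fix a b assume "sh w a = sh w b"
        then show "a = b" unfolding sh_def by (metis add_right_cancel ext)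
      qed
    qed
    also have "\<dots> = (\<Sum>\<nu>\<in>S. XI (ev n (weyl_act w (rhoB n))) * (of_int (m \<nu>) * XI (ev n \<nu>)))"
    proof (intro sum.cong refl)
      fix \<nu> assume "\<nu> \<in> S"
      have "(\<lambda>i. sh w \<nu> i - weyl_act w (rhoB n) i) = \<nu>" unfolding sh_def by simp
      moreover have "XI (ev n (sh w \<nu>)) = XI (ev n \<nu>) * XI (ev n (weyl_act w (rhoB n)))"
        unfolding sh_def ev_add fls_X_intpow_times_fls_X_intpow ..
      ultimately show "of_int (m (\<lambda>i. sh w \<nu> i - weyl_act w (rhoB n) i)) * XI (ev n (sh w \<nu>))
          = XI (ev n (weyl_act w (rhoB n))) * (of_int (m \<nu>) * XI (ev n \<nu>))" by (simp add: mult_ac)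
    qed
    also have "\<dots> = XI (ev n (weyl_act w (rhoB n))) * psB n (three_omega_n n)"
      unfolding psB sum_distrib_left ..
    finally show ?thesis .
  qed
  have "(\<Sum>\<mu>\<in>F. of_int (\<Sum>w\<in>W. weyl_sgn n w * m (\<lambda>i. \<mu> i - weyl_act w (rhoB n) i)) * XI (ev n \<mu>))
      = (\<Sum>\<mu>\<in>F. \<Sum>w\<in>W. of_int (weyl_sgn n w) * (of_int (m (\<lambda>i. \<mu> i - weyl_act w (rhoB n) i)) * XI (ev n \<mu>)))"
    by (intro sum.cong refl) (simp add: sum_distrib_right sum_distrib_left mult_ac)
  also have "\<dots> = (\<Sum>w\<in>W. of_int (weyl_sgn n w) * (\<Sum>\<mu>\<in>F. of_int (m (\<lambda>i. \<mu> i - weyl_act w (rhoB n) i)) * XI (ev n \<mu>)))"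
    by (subst sum.swap) (simp add: sum_distrib_left)
  also have "\<dots> = (\<Sum>w\<in>W. of_int (weyl_sgn n w) * (XI (ev n (weyl_act w (rhoB n))) * psB n (three_omega_n n)))"
    by (intro sum.cong refl) (simp add: inner)
  also have "\<dots> = Dfls n (rhoB n) * psB n (three_omega_n n)"
    unfolding Dfls_def W_def sum_distrib_right by (simp add: mult_ac)
  finally have L: "(\<Sum>\<mu>\<in>F. of_int (\<Sum>w\<in>W. weyl_sgn n w * m (\<lambda>i. \<mu> i - weyl_act w (rhoB n) i)) * XI (ev n \<mu>))
      = Dfls n (rhoB n) * psB n (three_omega_n n)" .
  have "(\<Sum>\<mu>\<in>F. of_int (\<Sum>w\<in>W. weyl_sgn n w * (if weyl_act w (lamrho n) = \<mu> then 1 else 0)) * XI (ev n \<mu>))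
      = (\<Sum>\<mu>\<in>F. \<Sum>w\<in>W. of_int (weyl_sgn n w) * (if weyl_act w (lamrho n) = \<mu> then XI (ev n \<mu>) else 0))"
    by (intro sum.cong refl) (simp add: sum_distrib_right, intro sum.cong refl, simp)
  also have "\<dots> = (\<Sum>w\<in>W. of_int (weyl_sgn n w) * (\<Sum>\<mu>\<in>F. if weyl_act w (lamrho n) = \<mu> then XI (ev n \<mu>) else 0))"
    by (subst sum.swap) (simp add: sum_distrib_left)
  also have "\<dots> = (\<Sum>w\<in>W. of_int (weyl_sgn n w) * XI (ev n (weyl_act w (lamrho n))))"
  proof (intro sum.cong refl)
    fix w assume "w \<in> W"
    then have "weyl_act w (lamrho n) \<in> F" unfolding F_def by auto
    then show "of_int (weyl_sgn n w) * (\<Sum>\<mu>\<in>F. if weyl_act w (lamrho n) = \<mu> then XI (ev n \<mu>) else 0)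
        = of_int (weyl_sgn n w) * XI (ev n (weyl_act w (lamrho n)))"
      using finF by (simp add: sum.delta)
  qed
  also have "\<dots> = Dfls n (lamrho n)" unfolding Dfls_def W_def ..
  finally have R: "(\<Sum>\<mu>\<in>F. of_int (\<Sum>w\<in>W. weyl_sgn n w * (if weyl_act w (lamrho n) = \<mu> then 1 else 0)) * XI (ev n \<mu>))
      = Dfls n (lamrho n)" .
  show ?thesis using E L R by simp
qed


lemma prod_subdeg0:
  assumes "finite A" "\<And>x. x \<in> A \<Longrightarrow> f x \<noteq> 0 \<and> fls_subdegree (f x :: rat fls) = 0"
  shows "prod f A \<noteq> 0 \<and> fls_subdegree (prod f A) = 0"
  using assms
proof (induction A rule: finite_induct)
  case empty then show ?case by simp
next
  case (insert x F)
  then have a: "f x \<noteq> 0" "fls_subdegree (f x) = 0" and b: "prod f F \<noteq> 0" "fls_subdegree (prod f F) = 0" by auto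
  then show ?case using insert by (simp add: fls_subdegree_mult)
qed

lemma Gq_subdeg: "Gq c n \<noteq> 0 \<and> fls_subdegree (Gq c n) = 0"
  unfolding Gq_def
proof (rule prod_subdeg0)
  fix k assume "k \<in> {..<n}"
  have a: "1 - qq^(2*k+1+c) \<noteq> 0 \<and> fls_subdegree (1 - qq^(2*k+1+c)) = 0"
    by (intro conjI one_minus_qpow_nz one_minus_qpow_subdeg) simp_all
  have b: "(\<Prod>k'<k. 1 - qq^(k+k'+1+c)) \<noteq> 0 \<and> fls_subdegree (\<Prod>k'<k. 1 - qq^(k+k'+1+c)) = 0"
    by (rule prod_subdeg0) (simp, intro conjI one_minus_qpow_nz one_minus_qpow_subdeg, simp_all)
  show "(1 - qq^(2*k+1+c)) * (\<Prod>k'<k. 1 - qq^(k+k'+1+c)) \<noteq> 0 \<and>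
      fls_subdegree ((1 - qq^(2*k+1+c)) * (\<Prod>k'<k. 1 - qq^(k+k'+1+c))) = 0"
    using a b by (simp add: fls_subdegree_mult)
qed simp

lemma PP_subdeg: "PP n \<noteq> 0 \<and> fls_subdegree (PP n) = 0"
proof -
  have G: "Gq 3 n = PP n * Gq 0 n" by (rule Gq_identity)
  have "PP n \<noteq> 0" using G Gq_subdeg[of 3 n] by auto
  moreover have "fls_subdegree (PP n) = 0"
    using G Gq_subdeg[of 3 n] Gq_subdeg[of 0 n] \<open>PP n \<noteq> 0\<close> by (simp add: fls_subdegree_mult)
  ultimately show ?thesis by simp
qed

lemma XI_nz: "XI a \<noteq> 0"
  using XI_inv[of a] by auto

lemma prod_nz: "finite A \<Longrightarrow> (\<And>x. x \<in> A \<Longrightarrow> f x \<noteq> 0) \<Longrightarrow> prod f A \<noteq> (0::'a::semidom)"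
  by (simp add: prod_zero_iff)

theorem corollary5p18:
  fixes n :: nat
  assumes "1 \<le> n"
  shows "qCat (n + 1) * (\<Prod>k=1..n. 1 + qvar ^ k) = psB_tilde n (three_omega_n n)"
proof -
  define s :: "rat fls" where "s = signof (revp n)"
  define K0 where "K0 = s * WW 0 n * CC n * Gq 0 n"
  define N3 where "N3 = (\<Prod>k<n. XI (-3) ^ Suc k)"
  have D0: "Dfls n (rhoB n) = s * (WW 0 n * CC n * Gq 0 n)"
    unfolding s_def by (rule Dfls_Gq) (simp add: rhoB_rev)
  have D3: "Dfls n (lamrho n) = s * (WW 3 n * CC n * Gq 3 n)"
    unfolding s_def by (rule Dfls_Gq) (simp add: lamrho_rev)
  have snz: "s \<noteq> 0" unfolding s_def by (simp add: sign_def)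
  have Wnz: "WW 0 n \<noteq> 0" unfolding WW_def
  proof (rule prod_nz)
    fix k
    show "- XI (- int (2*k+1+0)) * XI (- int (2*k+1+0)) ^ k \<noteq> 0"
      by (simp only: mult_eq_0_iff neg_equal_0_iff_equal power_eq_0_iff XI_nz) simp
  qed simp
  have Cnz: "CC n \<noteq> 0" unfolding CC_def
    by (intro prod_nz one_minus_qpow_nz) auto
  have K0nz: "K0 \<noteq> 0" unfolding K0_def using snz Wnz Cnz Gq_subdeg[of 0 n] by simp
  have "K0 * psB n (three_omega_n n) = K0 * (N3 * PP n)"
  proof -
    have "K0 * psB n (three_omega_n n) = Dfls n (rhoB n) * psB n (three_omega_n n)"
      unfolding K0_def D0 by (simp add: mult_ac)
    also have "\<dots> = Dfls n (lamrho n)" by (rule psB_rel)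
    also have "\<dots> = K0 * (N3 * PP n)"
      unfolding D3 WW_3 Gq_identity K0_def N3_def by (simp add: mult_ac)
    finally show ?thesis .
  qed
  then have psB: "psB n (three_omega_n n) = N3 * PP n" using K0nz by simp
  define E where "E = (\<Sum>k<n. int (Suc k) * (-3))"
  have N3E: "N3 = XI E" unfolding N3_def E_def fls_X_intpow_power prod_XI ..
  have P: "PP n \<noteq> 0" "fls_subdegree (PP n) = 0" using PP_subdeg by auto
  have "psB_tilde n (three_omega_n n) = fls_shift E (XI E * PP n)"
    unfolding psB_tilde_def psB N3E using P by (simp add: fls_subdegree_mult_fls_X_intpow(1))
  also have "\<dots> = PP n" by (simp add: fls_X_intpow_times_conv_shift(1) fls_shift_fls_shift)
  finally show ?thesis unfolding PP_def ..
qed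


end
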